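(* Let $\{w^k\}$ be generated by the L-GADMM iteration and $\{\bar w^k\}$ be the auxiliary sequence. For any integer $t>0$ let $w_t=\frac1{t+1}\sum_{k=0}^t\bar w^k$ and let $u_t$ be its $u$-part (its first $m$ blocks). Then $w_t\in\mathcal{W}$ and $$\theta(u_t)-\theta(u)+(w_t-w)^\top F(w)\le\frac{1}{2(t+1)}\|w-w^0\|_H^2\qquad\forall w\in\mathcal{W}.$$
   Context: Standing setting. Let $m\ge 2$, $\ell$, $n_1,\dots,n_m$ be positive integers. For $i=1,\dots,m$ let $\theta_i:\mathbb{R}^{n_i}\to\mathbb{R}$ be convex, $\mathcal{X}_i\subseteq\mathbb{R}^{n_i}$ nonempty closed convex, $A_i\in\mathbb{R}^{\ell\times n_i}$ of full column rank, and $b\in\mathbb{R}^\ell$. Problem (P): $\min\{\sum_{i=1}^m\theta_i(x_i):\sum_{i=1}^mA_ix_i=b,\ x_i\in\mathcal{X}_i\}$, assumed to have a nonempty solution set. Write $u=(x_1,\dots,x_m)$, $w=(x_1,\dots,x_m,y)$ with $y\in\mathbb{R}^\ell$, $\theta(u)=\sum_i\theta_i(x_i)$, $F(w)=(-A_1^\top y,\dots,-A_m^\top y,\ \sum_iA_ix_i-b)$, $\mathcal{W}=\mathcal{X}_1\times\cdots\times\mathcal{X}_m\times\mathbb{R}^\ell$, and $\mathcal{W}^*=\{w^*\in\mathcal{W}:\theta(u)-\theta(u^* )+(w-w^* )^\top F(w^* )\ge0\ \forall w\in\mathcal{W}\}$ (nonempty). For symmetric $G$, $\|v\|_G^2:=v^\top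 Gv$; $\|\cdot\|$ is the Euclidean norm. Vectors are partitioned as $w=(R,x_m,y)$ with $R=(x_1,\dots,x_{m-1})$. Parameters: $\rho>0$, $\gamma\in(0,2)$, symmetric positive definite $P_i\in\mathbb{R}^{n_i\times n_i}$ ($i=1,\dots,m$) such that $G_1\succ0$, where $G_1$ is the symmetric block matrix with diagonal blocks $P_1,\dots,P_{m-1}$ and $(i,j)$ block $-\rho A_i^\top A_j$ for $i\ne j$, $1\le i,j\le m-1$. Matrices (w.r.t. the partition $(R,x_m,y)$): $Q=\begin{pmatrix}G_1&0&0\\0&\rho A_m^\top A_m+P_m&(1-\gamma)A_m^\top\\0&-A_m&\frac1\rho I_\ell\end{pmatrix}$, $M=\begin{pmatrix}I&0&0\\0&I_{n_m}&0\\0&-\rho A_m&\gamma I_\ell\end{pmatrix}$, $H=\begin{pmatrix}G_1&0&0\\0&P_m+\frac\rho\gamma A_m^\top A_m&\frac{1-\gamma}\gamma A_m^\top\\0&\frac{1-\gamma}\gamma A_m&\frac1{\gamma\rho}I_\ell\end{pmatrix}$, $N=Q^\top+Q-M^\top HM$. L-GADMM iteration: from an arbitrary $w^0=(x_1^0,\dots,x_m^0,y^0)\in\mathcal{W}$, for $k=0,1,2,\dots$: $x_j^{k+1}=\arg\min_{x_j\in\mathcal{X}_j}\{\theta_j(x_j)+\frac\rho2\|A_jx_j+\sum_{i=1,i\ne j}^mA_ix_i^k-b-\frac{y^k}\rho\|^2+\frac12\|x_j-x_j^k\|_{P_j}^2\}$ for $j=1,\dots,m-1$; $x_m^{k+1}=\arg\min_{x_m\in\mathcal{X}_m}\{\theta_m(x_m)+\frac\rho2\|\gamma\sum_{i=1}^{m-1}A_ix_i^{k+1}+(1-\gamma)(b-A_mx_m^k)+A_mx_m-b-\frac{y^k}\rho\|^2+\frac12\|x_m-x_m^k\|_{P_m}^2\}$;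 $y^{k+1}=y^k-\rho\big(\gamma\sum_{i=1}^{m-1}A_ix_i^{k+1}+(1-\gamma)(b-A_mx_m^k)+A_mx_m^{k+1}-b\big)$. Auxiliary sequence: $\bar w^k=(\bar x_1^k,\dots,\bar x_m^k,\bar y^k)$ with $\bar x_i^k=x_i^{k+1}$ ($i=1,\dots,m$) and $\bar y^k=y^k-\rho(\sum_{i=1}^{m-1}A_ix_i^{k+1}+A_mx_m^k-b)$; $\bar u^k=(\bar x_1^k,\dots,\bar x_m^k)$, $R^k=(x_1^k,\dots,x_{m-1}^k)$, $\bar R^k=(\bar x_1^k,\dots,\bar x_{m-1}^k)$. *)

theory Defs
  imports "Jordan_Normal_Form.DL_Rank"
begin

text \<open>Vectors of varying dimension are Jordan_Normal_Form vectors (real vec);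
 block indices range over {1..m}.\<close>

definition vsum :: "nat \<Rightarrow> (nat \<Rightarrow> real vec) \<Rightarrow> nat set \<Rightarrow> real vec" where
  "vsum l f I = vec l (\<lambda>j. \<Sum>i\<in>I. f i $ j)"

definition sqn :: "real vec \<Rightarrow> real" where
  "sqn v = v \<bullet> v"

definition quad :: "real mat \<Rightarrow> real vec \<Rightarrow> real" where
  "quad G v = v \<bullet> (G *\<^sub>v v)"

definition convex_fun_vec :: "nat \<Rightarrow> (real vec \<Rightarrow> real) \<Rightarrow> bool" where
  "convex_fun_vec n f = (\<forall>x\<in>carrier_vec n. \<forall>z\<in>carrier_vec n. \<forall>t::real. 0 \<le> t \<and> t \<le> 1 \<longrightarrow>
      f (t \<cdot>\<^sub>v x + (1 - t) \<cdot>\<^sub>v z) \<le> t * f x + (1 - t) * f z)"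

definition convex_set_vec :: "nat \<Rightarrow> real vec set \<Rightarrow> bool" where
  "convex_set_vec n X = (X \<subseteq> carrier_vec n \<and> (\<forall>x\<in>X. \<forall>z\<in>X. \<forall>t::real. 0 \<le> t \<and> t \<le> 1 \<longrightarrow>
      t \<cdot>\<^sub>v x + (1 - t) \<cdot>\<^sub>v z \<in> X))"

definition closed_set_vec :: "nat \<Rightarrow> real vec set \<Rightarrow> bool" where
  "closed_set_vec n X = (X \<subseteq> carrier_vec n \<and> (\<forall>s z. (\<forall>k. s k \<in> X) \<longrightarrow> z \<in> carrier_vec n \<longrightarrow>
      (\<forall>j<n. (\<lambda>k. s k $ j) \<longlonglongrightarrow> z $ j) \<longrightarrow> z \<in> X))"

definition full_column_rank :: "nat \<Rightarrow> nat \<Rightarrow> real mat \<Rightarrow> bool" where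
  "full_column_rank l n A = (A \<in> carrier_mat l n \<and> vec_space.rank l A = n)"

definition sym_pos_def :: "nat \<Rightarrow> real mat \<Rightarrow> bool" where
  "sym_pos_def n P = (P \<in> carrier_mat n n \<and> transpose_mat P = P \<and>
      (\<forall>v\<in>carrier_vec n. v \<noteq> 0\<^sub>v n \<longrightarrow> quad P v > 0))"

text \<open>Quadratic form of the block matrix G_1 (diagonal blocks P_i, off-diagonal blocks
 -rho A_i^T A_j, i,j in {1..m-1}) evaluated at R = (x_1,...,x_{m-1}).\<close>
definition G1_quad :: "nat \<Rightarrow> real \<Rightarrow> (nat \<Rightarrow> real mat) \<Rightarrow> (nat \<Rightarrow> real mat) \<Rightarrow> (nat \<Rightarrow> real vec) \<Rightarrow> real" where
  "G1_quad m \<rho> A P R =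
     (\<Sum>i\<in>{1..<m}. R i \<bullet> (P i *\<^sub>v R i))
     + (\<Sum>i\<in>{1..<m}. \<Sum>j\<in>{1..<m} - {i}. R i \<bullet> (((- \<rho>) \<cdot>\<^sub>m (transpose_mat (A i) * A j)) *\<^sub>v R j))"

definition G1_pos_def :: "nat \<Rightarrow> (nat \<Rightarrow> nat) \<Rightarrow> real \<Rightarrow> (nat \<Rightarrow> real mat) \<Rightarrow> (nat \<Rightarrow> real mat) \<Rightarrow> bool" where
  "G1_pos_def m n \<rho> A P = (\<forall>R. (\<forall>i\<in>{1..<m}. R i \<in> carrier_vec (n i)) \<longrightarrow>
      (\<exists>i\<in>{1..<m}. R i \<noteq> 0\<^sub>v (n i)) \<longrightarrow> G1_quad m \<rho> A P R > 0)"

text \<open>||w||_H^2 for w = (R, x_m, y), H the block matrix from the paper.\<close>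
definition H_quad :: "nat \<Rightarrow> real \<Rightarrow> real \<Rightarrow> (nat \<Rightarrow> real mat) \<Rightarrow> (nat \<Rightarrow> real mat) \<Rightarrow> (nat \<Rightarrow> real vec) \<Rightarrow> real vec \<Rightarrow> real" where
  "H_quad m \<rho> \<gamma> A P u y =
     G1_quad m \<rho> A P u
     + u m \<bullet> ((P m + (\<rho> / \<gamma>) \<cdot>\<^sub>m (transpose_mat (A m) * A m)) *\<^sub>v u m)
     + u m \<bullet> ((((1 - \<gamma>) / \<gamma>) \<cdot>\<^sub>m transpose_mat (A m)) *\<^sub>v y)
     + y \<bullet> ((((1 - \<gamma>) / \<gamma>) \<cdot>\<^sub>m A m) *\<^sub>v u m)
     + y \<bullet> ((1 / (\<gamma> * \<rho>)) \<cdot>\<^sub>v y)"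

definition theta_sum :: "nat \<Rightarrow> (nat \<Rightarrow> real vec \<Rightarrow> real) \<Rightarrow> (nat \<Rightarrow> real vec) \<Rightarrow> real" where
  "theta_sum m \<theta> u = (\<Sum>i\<in>{1..m}. \<theta> i (u i))"

text \<open>theta(u) - theta(u') + (w - w')^T F(w') with w = (u,y), w' = (u',y').\<close>
definition vi_gap :: "nat \<Rightarrow> nat \<Rightarrow> (nat \<Rightarrow> real vec \<Rightarrow> real) \<Rightarrow> (nat \<Rightarrow> real mat) \<Rightarrow> real vec
     \<Rightarrow> (nat \<Rightarrow> real vec) \<Rightarrow> real vec \<Rightarrow> (nat \<Rightarrow> real vec) \<Rightarrow> real vec \<Rightarrow> real" where
  "vi_gap m l \<theta> A b u y u' y' =
     theta_sum m \<theta> u - theta_sum m \<theta> u'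
     + (\<Sum>i\<in>{1..m}. (u i - u' i) \<bullet> (- (transpose_mat (A i) *\<^sub>v y')))
     + (y - y') \<bullet> (vsum l (\<lambda>i. A i *\<^sub>v u' i) {1..m} - b)"

definition in_W :: "nat \<Rightarrow> nat \<Rightarrow> (nat \<Rightarrow> real vec set) \<Rightarrow> (nat \<Rightarrow> real vec) \<Rightarrow> real vec \<Rightarrow> bool" where
  "in_W m l X u y = ((\<forall>i\<in>{1..m}. u i \<in> X i) \<and> y \<in> carrier_vec l)"

definition sub_obj :: "nat \<Rightarrow> nat \<Rightarrow> real \<Rightarrow> (nat \<Rightarrow> real vec \<Rightarrow> real) \<Rightarrow> (nat \<Rightarrow> real mat) \<Rightarrow> real vec
     \<Rightarrow> (nat \<Rightarrow> real mat) \<Rightarrow> (nat \<Rightarrow> real vec) \<Rightarrow> real vec \<Rightarrow> nat \<Rightarrow> real vec \<Rightarrow> real" where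
  "sub_obj m l \<rho> \<theta> A b P xk yk j z =
     \<theta> j z + \<rho> / 2 * sqn (A j *\<^sub>v z + vsum l (\<lambda>i. A i *\<^sub>v xk i) ({1..m} - {j}) - b - (1 / \<rho>) \<cdot>\<^sub>v yk)
     + 1 / 2 * quad (P j) (z - xk j)"

definition sub_obj_m :: "nat \<Rightarrow> nat \<Rightarrow> real \<Rightarrow> real \<Rightarrow> (nat \<Rightarrow> real vec \<Rightarrow> real) \<Rightarrow> (nat \<Rightarrow> real mat) \<Rightarrow> real vec
     \<Rightarrow> (nat \<Rightarrow> real mat) \<Rightarrow> (nat \<Rightarrow> real vec) \<Rightarrow> real vec \<Rightarrow> real vec \<Rightarrow> real vec \<Rightarrow> real" where
  "sub_obj_m m l \<rho> \<gamma> \<theta> A b P xn xmk yk z =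
     \<theta> m z + \<rho> / 2 * sqn (\<gamma> \<cdot>\<^sub>v vsum l (\<lambda>i. A i *\<^sub>v xn i) {1..<m} + (1 - \<gamma>) \<cdot>\<^sub>v (b - A m *\<^sub>v xmk)
        + A m *\<^sub>v z - b - (1 / \<rho>) \<cdot>\<^sub>v yk)
     + 1 / 2 * quad (P m) (z - xmk)"

definition is_argmin :: "real vec set \<Rightarrow> (real vec \<Rightarrow> real) \<Rightarrow> real vec \<Rightarrow> bool" where
  "is_argmin X f z = (z \<in> X \<and> (\<forall>z'\<in>X. f z \<le> f z'))"

text \<open>The L-GADMM sequence: x k i = x_i^k, y k = y^k.\<close>
definition lgadmm_seq :: "nat \<Rightarrow> nat \<Rightarrow> real \<Rightarrow> real \<Rightarrow> (nat \<Rightarrow> real vec \<Rightarrow> real) \<Rightarrow> (nat \<Rightarrow> real vec set)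
     \<Rightarrow> (nat \<Rightarrow> real mat) \<Rightarrow> real vec \<Rightarrow> (nat \<Rightarrow> real mat)
     \<Rightarrow> (nat \<Rightarrow> nat \<Rightarrow> real vec) \<Rightarrow> (nat \<Rightarrow> real vec) \<Rightarrow> bool" where
  "lgadmm_seq m l \<rho> \<gamma> \<theta> X A b P x y =
     (in_W m l X (x 0) (y 0) \<and>
      (\<forall>k. (\<forall>j\<in>{1..<m}. is_argmin (X j) (sub_obj m l \<rho> \<theta> A b P (x k) (y k) j) (x (Suc k) j))
         \<and> is_argmin (X m) (sub_obj_m m l \<rho> \<gamma> \<theta> A b P (x (Suc k)) (x k m) (y k)) (x (Suc k) m)
         \<and> y (Suc k) = y k - \<rho> \<cdot>\<^sub>v (\<gamma> \<cdot>\<^sub>v vsum l (\<lambda>i. A i *\<^sub>v x (Suc k) i) {1..<m}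
              + (1 - \<gamma>) \<cdot>\<^sub>v (b - A m *\<^sub>v x k m) + A m *\<^sub>v x (Suc k) m - b)))"

definition ybar :: "nat \<Rightarrow> nat \<Rightarrow> real \<Rightarrow> (nat \<Rightarrow> real mat) \<Rightarrow> real vec
     \<Rightarrow> (nat \<Rightarrow> nat \<Rightarrow> real vec) \<Rightarrow> (nat \<Rightarrow> real vec) \<Rightarrow> nat \<Rightarrow> real vec" where
  "ybar m l \<rho> A b x y k = y k - \<rho> \<cdot>\<^sub>v (vsum l (\<lambda>i. A i *\<^sub>v x (Suc k) i) {1..<m} + A m *\<^sub>v x k m - b)"

end

theory Submission
  imports Defs
begin


lemma smult_mat_mult_vec:
  fixes M :: "real mat"
  assumes "M \<in> carrier_mat nr nc" "v \<in> carrier_vec nc"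
  shows "(c \<cdot>\<^sub>m M) *\<^sub>v v = c \<cdot>\<^sub>v (M *\<^sub>v v)"
  using assms by (intro eq_vecI) (auto simp: scalar_prod_def sum_distrib_left mult.assoc)

lemma sp_transpose:
  fixes A :: "real mat"
  assumes "A \<in> carrier_mat l n" "u \<in> carrier_vec n" "y \<in> carrier_vec l"
  shows "u \<bullet> (transpose_mat A *\<^sub>v y) = (A *\<^sub>v u) \<bullet> y"
proof -
  have 1: "(transpose_mat A *\<^sub>v y) \<bullet> u = y \<bullet> (A *\<^sub>v u)" by (rule transpose_vec_mult_scalar[OF assms(1,2,3)])
  have c1: "transpose_mat A *\<^sub>v y \<in> carrier_vec n" "A *\<^sub>v u \<in> carrier_vec l" using assms by auto
  have "u \<bullet> (transpose_mat A *\<^sub>v y) = (transpose_mat A *\<^sub>v y) \<bullet> u" by (rule comm_scalar_prod[OF assms(2) c1(1)])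
  also have "\<dots> = y \<bullet> (A *\<^sub>v u)" by (rule 1)
  also have "\<dots> = (A *\<^sub>v u) \<bullet> y" by (rule comm_scalar_prod[OF assms(3) c1(2)])
  finally show ?thesis .
qed

lemma sym_swap:
  fixes P :: "real mat"
  assumes "P \<in> carrier_mat n n" "transpose_mat P = P" "r \<in> carrier_vec n" "d \<in> carrier_vec n"
  shows "r \<bullet> (P *\<^sub>v d) = d \<bullet> (P *\<^sub>v r)"
proof -
  have c: "P *\<^sub>v r \<in> carrier_vec n" using assms by auto
  have "r \<bullet> (P *\<^sub>v d) = r \<bullet> (transpose_mat P *\<^sub>v d)" using assms(2) by simp
  also have "\<dots> = (P *\<^sub>v r) \<bullet> d" by (rule sp_transpose[OF assms(1,3,4)])
  also have "\<dots> = d \<bullet> (P *\<^sub>v r)" by (rule comm_scalar_prod[OF c assms(4)])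
  finally show ?thesis .
qed

lemma quad_add:
  assumes "P \<in> carrier_mat n n" "transpose_mat P = P" "r \<in> carrier_vec n" "d \<in> carrier_vec n"
  shows "quad P (r + d) = quad P r + 2 * (r \<bullet> (P *\<^sub>v d)) + quad P d"
proof -
  have "quad P (r + d) = (r + d) \<bullet> (P *\<^sub>v r + P *\<^sub>v d)"
    unfolding quad_def using assms by (simp add: mult_add_distrib_mat_vec)
  also have "\<dots> = r \<bullet> (P *\<^sub>v r) + r \<bullet> (P *\<^sub>v d) + (d \<bullet> (P *\<^sub>v r) + d \<bullet> (P *\<^sub>v d))"
    using assms by (simp add: add_scalar_prod_distrib[of r n d] scalar_prod_add_distrib[of _ n])
  also have "d \<bullet> (P *\<^sub>v r) = r \<bullet> (P *\<^sub>v d)" using sym_swap assms by metis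
  finally show ?thesis unfolding quad_def by simp
qed

lemma quad_smult:
  assumes "P \<in> carrier_mat n n" "d \<in> carrier_vec n"
  shows "quad P (s \<cdot>\<^sub>v d) = s^2 * quad P d"
  unfolding quad_def using assms by (simp add: mult_mat_vec power2_eq_square)

lemma sqn_add_smult:
  assumes "p \<in> carrier_vec l" "q \<in> carrier_vec l"
  shows "sqn (p + s \<cdot>\<^sub>v q) = sqn p + 2 * s * (p \<bullet> q) + s^2 * sqn q"
  using assms unfolding sqn_def
  by (simp add: add_scalar_prod_distrib[of _ l] scalar_prod_add_distrib[of _ l] comm_scalar_prod[of p l q]
      power2_eq_square algebra_simps)

lemma small_lim:
  fixes G C :: real
  assumes "\<And>s. 0 < s \<Longrightarrow> s \<le> 1 \<Longrightarrow> 0 \<le> s * G + s^2 * C"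
  shows "0 \<le> G"
proof (rule ccontr)
  assume "\<not> 0 \<le> G"
  hence G: "G < 0" by simp
  define D where "D = 2 * (\<bar>C\<bar> + 1)"
  have D: "D > 0" unfolding D_def by simp
  define s where "s = min 1 (- G / D)"
  have q: "- G / D > 0" using G D by (simp add: divide_neg_pos)
  have s0: "0 < s" "s \<le> 1" using divide_neg_pos[OF G D] by (auto simp: s_def)
  have "s \<le> - G / D" by (simp add: s_def)
  hence "s * D \<le> - G" using D by (metis minus_divide_left mult.commute pos_le_divide_eq)
  hence "s * \<bar>C\<bar> < - G" using s0 G unfolding D_def by (simp add: algebra_simps)
  moreover have "s * C \<le> s * \<bar>C\<bar>" using s0 by (simp add: mult_left_mono)
  ultimately have "G + s * C < 0" by linarith
  hence "s * (G + s * C) < 0" using s0 by (simp add: mult_pos_neg)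
  with assms[OF s0] show False by (simp add: algebra_simps power2_eq_square)
qed



lemma vi_opt:
  fixes A P :: "real mat" and \<theta> :: "real vec \<Rightarrow> real"
  assumes th: "convex_fun_vec n \<theta>" and Xc: "convex_set_vec n X"
    and A: "A \<in> carrier_mat l n" and v: "v \<in> carrier_vec l"
    and P: "P \<in> carrier_mat n n" "transpose_mat P = P"
    and z0: "z0 \<in> carrier_vec n" and am: "is_argmin X f zb"
    and f: "\<And>z. z \<in> X \<Longrightarrow> f z = \<theta> z + \<rho> / 2 * sqn (A *\<^sub>v z + v) + 1 / 2 * quad P (z - z0)"
    and z: "z \<in> X"
  shows "0 \<le> \<theta> z - \<theta> zb + \<rho> * ((A *\<^sub>v zb + v) \<bullet> (A *\<^sub>v (z - zb))) + (zb - z0) \<bullet> (P *\<^sub>v (z - zb))"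
proof -
  have Xsub: "X \<subseteq> carrier_vec n" using Xc unfolding convex_set_vec_def by auto
  have zbX: "zb \<in> X" and zbmin: "\<And>z'. z' \<in> X \<Longrightarrow> f zb \<le> f z'" using am unfolding is_argmin_def by auto
  have zb: "zb \<in> carrier_vec n" and zc: "z \<in> carrier_vec n" using zbX z Xsub by auto
  define d where "d = z - zb"
  define p where "p = A *\<^sub>v zb + v"
  define q where "q = A *\<^sub>v d"
  define r where "r = zb - z0"
  have d: "d \<in> carrier_vec n" and p: "p \<in> carrier_vec l" and q: "q \<in> carrier_vec l" and r: "r \<in> carrier_vec n"
    using zb zc z0 A v by (auto simp: d_def p_def q_def r_def)
  define G where "G = \<theta> z - \<theta> zb + \<rho> * (p \<bullet> q) + r \<bullet> (P *\<^sub>v d)"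
  define C where "C = \<rho> / 2 * sqn q + 1 / 2 * quad P d"
  have fzb: "f zb = \<theta> zb + \<rho> / 2 * sqn p + 1 / 2 * quad P r"
    using f[OF zbX] by (simp add: p_def r_def)
  have key: "0 \<le> s * G + s^2 * C" if s: "0 < s" "s \<le> 1" for s
  proof -
    define zs where "zs = zb + s \<cdot>\<^sub>v d"
    have zs_eq: "zs = s \<cdot>\<^sub>v z + (1 - s) \<cdot>\<^sub>v zb"
      unfolding zs_def d_def using zb zc by (intro eq_vecI) (auto simp: algebra_simps)
    have zsX: "zs \<in> X" using Xc z zbX s unfolding zs_eq convex_set_vec_def by auto
    have thz: "\<theta> zs \<le> s * \<theta> z + (1 - s) * \<theta> zb"
      using th zc zb s unfolding zs_eq convex_fun_vec_def by auto
    have e1: "A *\<^sub>v zs + v = p + s \<cdot>\<^sub>v q"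
    proof -
      have "A *\<^sub>v zs = A *\<^sub>v zb + s \<cdot>\<^sub>v q" unfolding zs_def q_def using A zb d
        by (simp add: mult_add_distrib_mat_vec mult_mat_vec)
      thus ?thesis unfolding p_def using A zb v q by (intro eq_vecI) auto
    qed
    have e2: "zs - z0 = r + s \<cdot>\<^sub>v d" unfolding zs_def r_def using zb z0 d by (intro eq_vecI) auto
    have fzs: "f zs = \<theta> zs + \<rho> / 2 * (sqn p + 2 * s * (p \<bullet> q) + s^2 * sqn q)
        + 1 / 2 * (quad P r + 2 * (s * (r \<bullet> (P *\<^sub>v d))) + s^2 * quad P d)"
    proof -
      have "quad P (r + s \<cdot>\<^sub>v d) = quad P r + 2 * (r \<bullet> (P *\<^sub>v (s \<cdot>\<^sub>v d))) + quad P (s \<cdot>\<^sub>v d)"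
        using quad_add[OF P r] d by simp
      also have "r \<bullet> (P *\<^sub>v (s \<cdot>\<^sub>v d)) = s * (r \<bullet> (P *\<^sub>v d))"
        using P d r by (simp add: mult_mat_vec)
      also have "quad P (s \<cdot>\<^sub>v d) = s^2 * quad P d" using quad_smult P d by blast
      finally show ?thesis using f[OF zsX] e1 e2 sqn_add_smult[OF p q] by simp
    qed
    have "f zb \<le> f zs" using zbmin zsX by blast
    hence "0 \<le> f zs - f zb" by simp
    also have "\<dots> \<le> s * G + s^2 * C"
      unfolding fzs fzb G_def C_def using thz by (simp add: algebra_simps)
    finally show ?thesis .
  qed
  have "0 \<le> G" by (rule small_lim[OF key])
  thus ?thesis unfolding G_def p_def q_def r_def d_def .
qed

lemma vsum_carrier[simp]: "vsum l f I \<in> carrier_vec l"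
  and vsum_dim[simp]: "dim_vec (vsum l f I) = l"
  and vsum_index[simp]: "j < l \<Longrightarrow> vsum l f I $ j = (\<Sum>i\<in>I. f i $ j)"
  unfolding vsum_def by auto

lemma vsum_cong: "(\<And>i. i \<in> I \<Longrightarrow> f i = g i) \<Longrightarrow> vsum l f I = vsum l g I"
  unfolding vsum_def by (intro eq_vecI) auto

lemma sp_vsum:
  assumes "\<forall>i\<in>I. f i \<in> carrier_vec l" "q \<in> carrier_vec l"
  shows "vsum l f I \<bullet> q = (\<Sum>i\<in>I. f i \<bullet> q)"
proof -
  have "vsum l f I \<bullet> q = (\<Sum>j\<in>{0..<l}. (\<Sum>i\<in>I. f i $ j) * q $ j)"
    using assms unfolding scalar_prod_def by simp
  also have "\<dots> = (\<Sum>i\<in>I. \<Sum>j\<in>{0..<l}. f i $ j * q $ j)"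
    by (simp add: sum_distrib_right sum.swap[of _ I])
  also have "\<dots> = (\<Sum>i\<in>I. f i \<bullet> q)"
    using assms unfolding scalar_prod_def by (intro sum.cong) auto
  finally show ?thesis .
qed

lemma sum_offdiag_swap:
  fixes f :: "'a \<Rightarrow> 'a \<Rightarrow> real"
  assumes "finite I"
  shows "(\<Sum>i\<in>I. \<Sum>j\<in>I - {i}. f i j) = (\<Sum>i\<in>I. \<Sum>j\<in>I - {i}. f j i)"
proof -
  have e: "\<And>(g::'a \<Rightarrow> 'a \<Rightarrow> real) i. i \<in> I \<Longrightarrow> (\<Sum>j\<in>I - {i}. g i j) = (\<Sum>j\<in>I. g i j) - g i i"
    using assms by (simp add: sum_diff1)
  have "(\<Sum>i\<in>I. \<Sum>j\<in>I - {i}. f i j) = (\<Sum>i\<in>I. (\<Sum>j\<in>I. f i j) - f i i)"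
    by (intro sum.cong) (auto simp: e)
  also have "\<dots> = (\<Sum>i\<in>I. \<Sum>j\<in>I. f i j) - (\<Sum>i\<in>I. f i i)" by (simp add: sum_subtractf)
  also have "(\<Sum>i\<in>I. \<Sum>j\<in>I. f i j) = (\<Sum>i\<in>I. \<Sum>j\<in>I. f j i)" by (rule sum.swap)
  also have "(\<Sum>i\<in>I. \<Sum>j\<in>I. f j i) - (\<Sum>i\<in>I. f i i) = (\<Sum>i\<in>I. (\<Sum>j\<in>I. f j i) - f i i)"
    by (simp add: sum_subtractf)
  also have "\<dots> = (\<Sum>i\<in>I. \<Sum>j\<in>I - {i}. f j i)"
    by (intro sum.cong) (auto simp: e[of _ "\<lambda>i j. f j i"])
  finally show ?thesis .
qed



lemma ip_sum: "u \<in> carrier_vec l \<Longrightarrow> v \<in> carrier_vec l \<Longrightarrow> u \<bullet> v = (\<Sum>i<l. u $ i * v $ i)"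
  unfolding scalar_prod_def by (simp add: atLeast0LessThan)

lemma sqn_sum: "u \<in> carrier_vec l \<Longrightarrow> sqn u = (\<Sum>i<l. u $ i * u $ i)"
  unfolding sqn_def by (rule ip_sum)

lemma lclaim_scalar:
  fixes t sa aa ac ae b yk yv yb y1 \<rho> \<gamma> :: real
  assumes r: "\<rho> > 0" and g: "0 < \<gamma>" "\<gamma> < 2"
    and yb: "yb = yk - \<rho> * (sa + ac - b)"
    and y1: "y1 = yk - \<rho> * (\<gamma> * sa + (1 - \<gamma>) * (b - ac) + aa - b)"
  shows "- (yb * t) - (y1 * (ae - aa)) + yv * (t + (ae - aa)) + (yb - yv) * (sa + t + ae - b)
    \<le> 1 / 2 * ((\<rho> / \<gamma> * ((ae - ac) * (ae - ac)) + 2 * ((1 - \<gamma>) / \<gamma>) * ((ae - ac) * (yv - yk)) + 1 / (\<gamma> * \<rho>) * ((yv - yk) * (yv - yk)))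
      - (\<rho> / \<gamma> * ((ae - aa) * (ae - aa)) + 2 * ((1 - \<gamma>) / \<gamma>) * ((ae - aa) * (yv - y1)) + 1 / (\<gamma> * \<rho>) * ((yv - y1) * (yv - y1))))"
proof -
  have "1 / 2 * ((\<rho> / \<gamma> * ((ae - ac) * (ae - ac)) + 2 * ((1 - \<gamma>) / \<gamma>) * ((ae - ac) * (yv - yk)) + 1 / (\<gamma> * \<rho>) * ((yv - yk) * (yv - yk)))
      - (\<rho> / \<gamma> * ((ae - aa) * (ae - aa)) + 2 * ((1 - \<gamma>) / \<gamma>) * ((ae - aa) * (yv - y1)) + 1 / (\<gamma> * \<rho>) * ((yv - y1) * (yv - y1))))
     - (- (yb * t) - (y1 * (ae - aa)) + yv * (t + (ae - aa)) + (yb - yv) * (sa + t + ae - b))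
     = (2 - \<gamma>) * \<rho> / 2 * ((sa + ac - b) * (sa + ac - b))"
    unfolding yb y1 using r g by (simp add: field_simps)
  moreover have "0 \<le> (2 - \<gamma>) * \<rho> / 2 * ((sa + ac - b) * (sa + ac - b))" using r g by simp
  ultimately show ?thesis by linarith
qed

lemma lclaim:
  fixes T Sa Aa Ac Ae b yk yv yb y1 :: "real vec"
  assumes c: "T \<in> carrier_vec l" "Sa \<in> carrier_vec l" "Aa \<in> carrier_vec l" "Ac \<in> carrier_vec l"
    "Ae \<in> carrier_vec l" "b \<in> carrier_vec l" "yk \<in> carrier_vec l" "yv \<in> carrier_vec l"
    and r: "\<rho> > 0" and g: "0 < \<gamma>" "\<gamma> < 2"
    and yb: "yb = yk - \<rho> \<cdot>\<^sub>v (Sa + Ac - b)"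
    and y1: "y1 = yk - \<rho> \<cdot>\<^sub>v (\<gamma> \<cdot>\<^sub>v Sa + (1 - \<gamma>) \<cdot>\<^sub>v (b - Ac) + Aa - b)"
  shows "- (yb \<bullet> T) - (y1 \<bullet> (Ae - Aa)) + yv \<bullet> (T + (Ae - Aa)) + (yb - yv) \<bullet> (Sa + T + Ae - b)
    \<le> 1 / 2 * ((\<rho> / \<gamma> * sqn (Ae - Ac) + 2 * ((1 - \<gamma>) / \<gamma>) * ((Ae - Ac) \<bullet> (yv - yk)) + 1 / (\<gamma> * \<rho>) * sqn (yv - yk))
      - (\<rho> / \<gamma> * sqn (Ae - Aa) + 2 * ((1 - \<gamma>) / \<gamma>) * ((Ae - Aa) \<bullet> (yv - y1)) + 1 / (\<gamma> * \<rho>) * sqn (yv - y1)))"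
proof -
  have cyb: "yb \<in> carrier_vec l" and cy1: "y1 \<in> carrier_vec l" unfolding yb y1 using c by auto
  have ybi: "\<And>i. i < l \<Longrightarrow> yb $ i = yk $ i - \<rho> * (Sa $ i + Ac $ i - b $ i)" unfolding yb using c by auto
  have y1i: "\<And>i. i < l \<Longrightarrow> y1 $ i = yk $ i - \<rho> * (\<gamma> * Sa $ i + (1 - \<gamma>) * (b $ i - Ac $ i) + Aa $ i - b $ i)"
    unfolding y1 using c by auto
  note cc = c cyb cy1
  have e1: "yb \<bullet> T = (\<Sum>i<l. yb $ i * T $ i)" by (subst ip_sum[where l=l]) (use cc in \<open>auto simp: add.assoc\<close>)
  have e2: "y1 \<bullet> (Ae - Aa) = (\<Sum>i<l. y1 $ i * (Ae $ i - Aa $ i))" by (subst ip_sum[where l=l]) (use cc in \<open>auto simp: add.assoc\<close>)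
  have e3: "yv \<bullet> (T + (Ae - Aa)) = (\<Sum>i<l. yv $ i * (T $ i + (Ae $ i - Aa $ i)))" by (subst ip_sum[where l=l]) (use cc in \<open>auto simp: add.assoc\<close>)
  have e4: "(yb - yv) \<bullet> (Sa + T + Ae - b) = (\<Sum>i<l. (yb $ i - yv $ i) * (Sa $ i + T $ i + Ae $ i - b $ i))"
    by (subst ip_sum[where l=l]) (use cc in \<open>auto simp: add.assoc\<close>)
  have e5: "sqn (Ae - Ac) = (\<Sum>i<l. (Ae $ i - Ac $ i) * (Ae $ i - Ac $ i))" by (subst sqn_sum[where l=l]) (use cc in auto)
  have e6: "sqn (Ae - Aa) = (\<Sum>i<l. (Ae $ i - Aa $ i) * (Ae $ i - Aa $ i))" by (subst sqn_sum[where l=l]) (use cc in auto)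
  have e7: "sqn (yv - yk) = (\<Sum>i<l. (yv $ i - yk $ i) * (yv $ i - yk $ i))" by (subst sqn_sum[where l=l]) (use cc in auto)
  have e8: "sqn (yv - y1) = (\<Sum>i<l. (yv $ i - y1 $ i) * (yv $ i - y1 $ i))" by (subst sqn_sum[where l=l]) (use cc in auto)
  have e9: "(Ae - Ac) \<bullet> (yv - yk) = (\<Sum>i<l. (Ae $ i - Ac $ i) * (yv $ i - yk $ i))" by (subst ip_sum[where l=l]) (use cc in \<open>auto simp: add.assoc\<close>)
  have e10: "(Ae - Aa) \<bullet> (yv - y1) = (\<Sum>i<l. (Ae $ i - Aa $ i) * (yv $ i - y1 $ i))" by (subst ip_sum[where l=l]) (use cc in \<open>auto simp: add.assoc\<close>)
  show ?thesis
    unfolding e1 e2 e3 e4 e5 e6 e7 e8 e9 e10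
    apply (simp only: sum_distrib_left sum_negf[symmetric] sum_subtractf[symmetric] sum.distrib[symmetric])
    apply (rule sum_mono)
    apply (rule lclaim_scalar[OF r g])
    using ybi y1i by auto
qed



definition G1b :: "nat \<Rightarrow> real \<Rightarrow> (nat \<Rightarrow> real mat) \<Rightarrow> (nat \<Rightarrow> real mat) \<Rightarrow> (nat \<Rightarrow> real vec) \<Rightarrow> (nat \<Rightarrow> real vec) \<Rightarrow> real" where
  "G1b m \<rho> A P R S = (\<Sum>i\<in>{1..<m}. R i \<bullet> (P i *\<^sub>v S i))
     - \<rho> * (\<Sum>i\<in>{1..<m}. \<Sum>j\<in>{1..<m} - {i}. (A i *\<^sub>v R i) \<bullet> (A j *\<^sub>v S j))"

lemma pair_term:
  fixes Ai Aj :: "real mat"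
  assumes "Ai \<in> carrier_mat l ni" "Aj \<in> carrier_mat l nj" "Ri \<in> carrier_vec ni" "Rj \<in> carrier_vec nj"
  shows "Ri \<bullet> ((c \<cdot>\<^sub>m (transpose_mat Ai * Aj)) *\<^sub>v Rj) = c * ((Ai *\<^sub>v Ri) \<bullet> (Aj *\<^sub>v Rj))"
proof -
  have M: "transpose_mat Ai * Aj \<in> carrier_mat ni nj" using assms by auto
  have "(c \<cdot>\<^sub>m (transpose_mat Ai * Aj)) *\<^sub>v Rj = c \<cdot>\<^sub>v (transpose_mat Ai *\<^sub>v (Aj *\<^sub>v Rj))"
    using smult_mat_mult_vec[OF M assms(4)] assoc_mult_mat_vec[of "transpose_mat Ai" ni l Aj nj Rj] assms
    by auto
  moreover have "Ri \<bullet> (c \<cdot>\<^sub>v (transpose_mat Ai *\<^sub>v (Aj *\<^sub>v Rj))) = c * (Ri \<bullet> (transpose_mat Ai *\<^sub>v (Aj *\<^sub>v Rj)))"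
    using assms by (intro scalar_prod_smult_right) auto
  moreover have "Ri \<bullet> (transpose_mat Ai *\<^sub>v (Aj *\<^sub>v Rj)) = (Ai *\<^sub>v Ri) \<bullet> (Aj *\<^sub>v Rj)"
    using assms by (intro sp_transpose) auto
  ultimately show ?thesis by simp
qed

lemma G1_quad_eq:
  assumes AP: "\<forall>i\<in>{1..<m}. A i \<in> carrier_mat l (n i)" and R: "\<forall>i\<in>{1..<m}. R i \<in> carrier_vec (n i)"
  shows "G1_quad m \<rho> A P R = G1b m \<rho> A P R R"
proof -
  have "(\<Sum>i\<in>{1..<m}. \<Sum>j\<in>{1..<m} - {i}. R i \<bullet> ((- \<rho>) \<cdot>\<^sub>m (transpose_mat (A i) * A j) *\<^sub>v R j))
      = (\<Sum>i\<in>{1..<m}. \<Sum>j\<in>{1..<m} - {i}. - \<rho> * ((A i *\<^sub>v R i) \<bullet> (A j *\<^sub>v R j)))"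
  proof (intro sum.cong refl)
    fix i j assume i: "i \<in> {1..<m}" and j: "j \<in> {1..<m} - {i}"
    show "R i \<bullet> ((- \<rho>) \<cdot>\<^sub>m (transpose_mat (A i) * A j) *\<^sub>v R j) = - \<rho> * ((A i *\<^sub>v R i) \<bullet> (A j *\<^sub>v R j))"
      by (rule pair_term[of "A i" l "n i" "A j" "n j"]) (use AP R i j in auto)
  qed
  also have "\<dots> = - \<rho> * (\<Sum>i\<in>{1..<m}. \<Sum>j\<in>{1..<m} - {i}. (A i *\<^sub>v R i) \<bullet> (A j *\<^sub>v R j))"
    by (simp add: sum_distrib_left)
  finally show ?thesis unfolding G1_quad_def G1b_def by simp
qed

lemma G1b_cong:
  assumes "\<forall>i\<in>{1..<m}. R i = R' i" "\<forall>i\<in>{1..<m}. S i = S' i"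
  shows "G1b m \<rho> A P R S = G1b m \<rho> A P R' S'"
  unfolding G1b_def using assms by (intro arg_cong2[where f = "(-)"] arg_cong2[where f = "(*)"] sum.cong refl) auto

locale G1ctx =
  fixes m l :: nat and n :: "nat \<Rightarrow> nat" and A P :: "nat \<Rightarrow> real mat"
  assumes AP: "\<forall>i\<in>{1..<m}. A i \<in> carrier_mat l (n i) \<and> P i \<in> carrier_mat (n i) (n i) \<and> transpose_mat (P i) = P i"
begin

lemma Ac: "i \<in> {1..<m} \<Longrightarrow> A i \<in> carrier_mat l (n i)" using AP by auto
lemma Pc: "i \<in> {1..<m} \<Longrightarrow> P i \<in> carrier_mat (n i) (n i)" using AP by auto
lemma Ps: "i \<in> {1..<m} \<Longrightarrow> transpose_mat (P i) = P i" using AP by auto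

lemma G1b_add_left:
  assumes R: "\<forall>i\<in>{1..<m}. R i \<in> carrier_vec (n i)" and S: "\<forall>i\<in>{1..<m}. S i \<in> carrier_vec (n i)"
    and T: "\<forall>i\<in>{1..<m}. T i \<in> carrier_vec (n i)"
  shows "G1b m \<rho> A P (\<lambda>i. R i + S i) T = G1b m \<rho> A P R T + G1b m \<rho> A P S T"
proof -
  have 1: "(\<Sum>i\<in>{1..<m}. (R i + S i) \<bullet> (P i *\<^sub>v T i)) = (\<Sum>i\<in>{1..<m}. R i \<bullet> (P i *\<^sub>v T i) + S i \<bullet> (P i *\<^sub>v T i))"
  proof (intro sum.cong refl)
    fix i assume i: "i \<in> {1..<m}"
    have c: "R i \<in> carrier_vec (n i)" "S i \<in> carrier_vec (n i)" "P i *\<^sub>v T i \<in> carrier_vec (n i)"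
      using R S T i mult_mat_vec_carrier[OF Pc[OF i]] by auto
    show "(R i + S i) \<bullet> (P i *\<^sub>v T i) = R i \<bullet> (P i *\<^sub>v T i) + S i \<bullet> (P i *\<^sub>v T i)"
      by (rule add_scalar_prod_distrib[OF c])
  qed
  have 2: "(\<Sum>i\<in>{1..<m}. \<Sum>j\<in>{1..<m} - {i}. (A i *\<^sub>v (R i + S i)) \<bullet> (A j *\<^sub>v T j))
     = (\<Sum>i\<in>{1..<m}. \<Sum>j\<in>{1..<m} - {i}. (A i *\<^sub>v R i) \<bullet> (A j *\<^sub>v T j) + (A i *\<^sub>v S i) \<bullet> (A j *\<^sub>v T j))"
  proof (intro sum.cong refl)
    fix i j assume i: "i \<in> {1..<m}" and j: "j \<in> {1..<m} - {i}"
    have c: "R i \<in> carrier_vec (n i)" "S i \<in> carrier_vec (n i)" using R S i by auto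
    have cj: "T j \<in> carrier_vec (n j)" using T j by auto
    have "A i *\<^sub>v (R i + S i) = A i *\<^sub>v R i + A i *\<^sub>v S i" by (rule mult_add_distrib_mat_vec[OF Ac[OF i] c])
    moreover have "(A i *\<^sub>v R i + A i *\<^sub>v S i) \<bullet> (A j *\<^sub>v T j) = (A i *\<^sub>v R i) \<bullet> (A j *\<^sub>v T j) + (A i *\<^sub>v S i) \<bullet> (A j *\<^sub>v T j)"
      by (rule add_scalar_prod_distrib[where n=l]) (use mult_mat_vec_carrier[OF Ac[OF i] c(1)] mult_mat_vec_carrier[OF Ac[OF i] c(2)]
          mult_mat_vec_carrier[OF Ac[of j] cj] j in auto)
    ultimately show "(A i *\<^sub>v (R i + S i)) \<bullet> (A j *\<^sub>v T j) = (A i *\<^sub>v R i) \<bullet> (A j *\<^sub>v T j) + (A i *\<^sub>v S i) \<bullet> (A j *\<^sub>v T j)"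
      by simp
  qed
  show ?thesis unfolding G1b_def 1 2 by (simp add: sum.distrib algebra_simps)
qed

lemma G1b_add_right:
  assumes R: "\<forall>i\<in>{1..<m}. R i \<in> carrier_vec (n i)" and S: "\<forall>i\<in>{1..<m}. S i \<in> carrier_vec (n i)"
    and T: "\<forall>i\<in>{1..<m}. T i \<in> carrier_vec (n i)"
  shows "G1b m \<rho> A P T (\<lambda>i. R i + S i) = G1b m \<rho> A P T R + G1b m \<rho> A P T S"
proof -
  have 1: "(\<Sum>i\<in>{1..<m}. T i \<bullet> (P i *\<^sub>v (R i + S i))) = (\<Sum>i\<in>{1..<m}. T i \<bullet> (P i *\<^sub>v R i) + T i \<bullet> (P i *\<^sub>v S i))"
  proof (intro sum.cong refl)
    fix i assume i: "i \<in> {1..<m}"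
    have c: "R i \<in> carrier_vec (n i)" "S i \<in> carrier_vec (n i)" "T i \<in> carrier_vec (n i)" using R S T i by auto
    have "P i *\<^sub>v (R i + S i) = P i *\<^sub>v R i + P i *\<^sub>v S i" by (rule mult_add_distrib_mat_vec[OF Pc[OF i] c(1,2)])
    moreover have "T i \<bullet> (P i *\<^sub>v R i + P i *\<^sub>v S i) = T i \<bullet> (P i *\<^sub>v R i) + T i \<bullet> (P i *\<^sub>v S i)"
      by (rule scalar_prod_add_distrib[OF c(3)]) (use mult_mat_vec_carrier[OF Pc[OF i] c(1)] mult_mat_vec_carrier[OF Pc[OF i] c(2)] in auto)
    ultimately show "T i \<bullet> (P i *\<^sub>v (R i + S i)) = T i \<bullet> (P i *\<^sub>v R i) + T i \<bullet> (P i *\<^sub>v S i)" by simp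
  qed
  have 2: "(\<Sum>i\<in>{1..<m}. \<Sum>j\<in>{1..<m} - {i}. (A i *\<^sub>v T i) \<bullet> (A j *\<^sub>v (R j + S j)))
     = (\<Sum>i\<in>{1..<m}. \<Sum>j\<in>{1..<m} - {i}. (A i *\<^sub>v T i) \<bullet> (A j *\<^sub>v R j) + (A i *\<^sub>v T i) \<bullet> (A j *\<^sub>v S j))"
  proof (intro sum.cong refl)
    fix i j assume i: "i \<in> {1..<m}" and j: "j \<in> {1..<m} - {i}"
    have j': "j \<in> {1..<m}" using j by auto
    have c: "R j \<in> carrier_vec (n j)" "S j \<in> carrier_vec (n j)" using R S j' by auto
    have ci: "T i \<in> carrier_vec (n i)" using T i by auto
    have "A j *\<^sub>v (R j + S j) = A j *\<^sub>v R j + A j *\<^sub>v S j" by (rule mult_add_distrib_mat_vec[OF Ac[OF j'] c])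
    moreover have "(A i *\<^sub>v T i) \<bullet> (A j *\<^sub>v R j + A j *\<^sub>v S j) = (A i *\<^sub>v T i) \<bullet> (A j *\<^sub>v R j) + (A i *\<^sub>v T i) \<bullet> (A j *\<^sub>v S j)"
      by (rule scalar_prod_add_distrib[where n=l]) (use mult_mat_vec_carrier[OF Ac[OF j'] c(1)] mult_mat_vec_carrier[OF Ac[OF j'] c(2)]
          mult_mat_vec_carrier[OF Ac[OF i] ci] in auto)
    ultimately show "(A i *\<^sub>v T i) \<bullet> (A j *\<^sub>v (R j + S j)) = (A i *\<^sub>v T i) \<bullet> (A j *\<^sub>v R j) + (A i *\<^sub>v T i) \<bullet> (A j *\<^sub>v S j)"
      by simp
  qed
  show ?thesis unfolding G1b_def 1 2 by (simp add: sum.distrib algebra_simps)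
qed

lemma G1b_sym:
  assumes R: "\<forall>i\<in>{1..<m}. R i \<in> carrier_vec (n i)" and S: "\<forall>i\<in>{1..<m}. S i \<in> carrier_vec (n i)"
  shows "G1b m \<rho> A P S R = G1b m \<rho> A P R S"
proof -
  have 1: "(\<Sum>i\<in>{1..<m}. S i \<bullet> (P i *\<^sub>v R i)) = (\<Sum>i\<in>{1..<m}. R i \<bullet> (P i *\<^sub>v S i))"
  proof (intro sum.cong refl)
    fix i assume i: "i \<in> {1..<m}"
    show "S i \<bullet> (P i *\<^sub>v R i) = R i \<bullet> (P i *\<^sub>v S i)"
      by (rule sym_swap[OF Pc[OF i] Ps[OF i]]) (use S R i in auto)
  qed
  have "(\<Sum>i\<in>{1..<m}. \<Sum>j\<in>{1..<m} - {i}. (A i *\<^sub>v S i) \<bullet> (A j *\<^sub>v R j))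
      = (\<Sum>i\<in>{1..<m}. \<Sum>j\<in>{1..<m} - {i}. (A j *\<^sub>v R j) \<bullet> (A i *\<^sub>v S i))"
  proof (intro sum.cong refl)
    fix i j assume i: "i \<in> {1..<m}" and j: "j \<in> {1..<m} - {i}"
    have j': "j \<in> {1..<m}" using j by auto
    show "(A i *\<^sub>v S i) \<bullet> (A j *\<^sub>v R j) = (A j *\<^sub>v R j) \<bullet> (A i *\<^sub>v S i)"
      by (rule comm_scalar_prod[where n=l]) (use mult_mat_vec_carrier[OF Ac[OF i]] mult_mat_vec_carrier[OF Ac[OF j']] S R i j' in auto)
  qed
  also have "\<dots> = (\<Sum>i\<in>{1..<m}. \<Sum>j\<in>{1..<m} - {i}. (A i *\<^sub>v R i) \<bullet> (A j *\<^sub>v S j))"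
    by (rule sum_offdiag_swap[symmetric, where f = "\<lambda>i j. (A i *\<^sub>v R i) \<bullet> (A j *\<^sub>v S j)"]) simp
  finally show ?thesis unfolding G1b_def 1 by simp
qed

lemma G1b_expand:
  assumes R: "\<forall>i\<in>{1..<m}. R i \<in> carrier_vec (n i)" and S: "\<forall>i\<in>{1..<m}. S i \<in> carrier_vec (n i)"
  shows "G1b m \<rho> A P (\<lambda>i. R i + S i) (\<lambda>i. R i + S i) = G1b m \<rho> A P R R + 2 * G1b m \<rho> A P R S + G1b m \<rho> A P S S"
proof -
  have RS: "\<forall>i\<in>{1..<m}. R i + S i \<in> carrier_vec (n i)" using R S by auto
  show ?thesis
    using G1b_add_left[OF R S RS, of \<rho>] G1b_add_right[OF R S R, of \<rho>] G1b_add_right[OF R S S, of \<rho>]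
      G1b_sym[OF R S, of \<rho>] by simp
qed

end



lemma Hq_eq:
  fixes A P :: "nat \<Rightarrow> real mat"
  assumes A: "A m \<in> carrier_mat l (n m)" and P: "P m \<in> carrier_mat (n m) (n m)"
    and U: "U m \<in> carrier_vec (n m)" and Y: "Y \<in> carrier_vec l"
  shows "H_quad m \<rho> \<gamma> A P U Y = G1_quad m \<rho> A P U + quad (P m) (U m) + \<rho> / \<gamma> * sqn (A m *\<^sub>v U m)
     + 2 * ((1 - \<gamma>) / \<gamma>) * ((A m *\<^sub>v U m) \<bullet> Y) + 1 / (\<gamma> * \<rho>) * sqn Y"
proof -
  define u where "u = U m"
  define B where "B = A m"
  define c where "c = (1 - \<gamma>) / \<gamma>"
  have u: "u \<in> carrier_vec (n m)" and B: "B \<in> carrier_mat l (n m)" using U A by (auto simp: u_def B_def)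
  have Bu: "B *\<^sub>v u \<in> carrier_vec l" using B u by auto
  have BT: "transpose_mat B \<in> carrier_mat (n m) l" using B by auto
  have BTB: "transpose_mat B * B \<in> carrier_mat (n m) (n m)" using B by auto
  have f1: "(P m + (\<rho> / \<gamma>) \<cdot>\<^sub>m (transpose_mat B * B)) *\<^sub>v u = P m *\<^sub>v u + (\<rho> / \<gamma>) \<cdot>\<^sub>v (transpose_mat B *\<^sub>v (B *\<^sub>v u))"
  proof -
    have "(P m + (\<rho> / \<gamma>) \<cdot>\<^sub>m (transpose_mat B * B)) *\<^sub>v u = P m *\<^sub>v u + ((\<rho> / \<gamma>) \<cdot>\<^sub>m (transpose_mat B * B)) *\<^sub>v u"
      by (rule add_mult_distrib_mat_vec[OF P _ u]) (use BTB in auto)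
    also have "((\<rho> / \<gamma>) \<cdot>\<^sub>m (transpose_mat B * B)) *\<^sub>v u = (\<rho> / \<gamma>) \<cdot>\<^sub>v ((transpose_mat B * B) *\<^sub>v u)"
      by (rule smult_mat_mult_vec[OF BTB u])
    also have "(transpose_mat B * B) *\<^sub>v u = transpose_mat B *\<^sub>v (B *\<^sub>v u)"
      by (rule assoc_mult_mat_vec[OF BT B u])
    finally show ?thesis .
  qed
  have f2: "u \<bullet> (P m *\<^sub>v u + (\<rho> / \<gamma>) \<cdot>\<^sub>v (transpose_mat B *\<^sub>v (B *\<^sub>v u))) = quad (P m) u + \<rho> / \<gamma> * sqn (B *\<^sub>v u)"
  proof -
    have "u \<bullet> (P m *\<^sub>v u + (\<rho> / \<gamma>) \<cdot>\<^sub>v (transpose_mat B *\<^sub>v (B *\<^sub>v u)))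
        = u \<bullet> (P m *\<^sub>v u) + u \<bullet> ((\<rho> / \<gamma>) \<cdot>\<^sub>v (transpose_mat B *\<^sub>v (B *\<^sub>v u)))"
      by (rule scalar_prod_add_distrib[OF u]) (use P u BT Bu in auto)
    also have "u \<bullet> ((\<rho> / \<gamma>) \<cdot>\<^sub>v (transpose_mat B *\<^sub>v (B *\<^sub>v u))) = \<rho> / \<gamma> * (u \<bullet> (transpose_mat B *\<^sub>v (B *\<^sub>v u)))"
      by (rule scalar_prod_smult_right) (use u BT in auto)
    also have "u \<bullet> (transpose_mat B *\<^sub>v (B *\<^sub>v u)) = (B *\<^sub>v u) \<bullet> (B *\<^sub>v u)"
      by (rule sp_transpose[OF B u Bu])
    finally show ?thesis unfolding quad_def sqn_def .
  qed
  have f4: "u \<bullet> ((c \<cdot>\<^sub>m transpose_mat B) *\<^sub>v Y) = c * ((B *\<^sub>v u) \<bullet> Y)"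
  proof -
    have "(c \<cdot>\<^sub>m transpose_mat B) *\<^sub>v Y = c \<cdot>\<^sub>v (transpose_mat B *\<^sub>v Y)" by (rule smult_mat_mult_vec[OF BT Y])
    moreover have "u \<bullet> (c \<cdot>\<^sub>v (transpose_mat B *\<^sub>v Y)) = c * (u \<bullet> (transpose_mat B *\<^sub>v Y))"
      by (rule scalar_prod_smult_right) (use u BT Y in auto)
    moreover have "u \<bullet> (transpose_mat B *\<^sub>v Y) = (B *\<^sub>v u) \<bullet> Y" by (rule sp_transpose[OF B u Y])
    ultimately show ?thesis by simp
  qed
  have f5: "Y \<bullet> ((c \<cdot>\<^sub>m B) *\<^sub>v u) = c * ((B *\<^sub>v u) \<bullet> Y)"
  proof -
    have "(c \<cdot>\<^sub>m B) *\<^sub>v u = c \<cdot>\<^sub>v (B *\<^sub>v u)" by (rule smult_mat_mult_vec[OF B u])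
    moreover have "Y \<bullet> (c \<cdot>\<^sub>v (B *\<^sub>v u)) = c * (Y \<bullet> (B *\<^sub>v u))"
      by (rule scalar_prod_smult_right) (use Y Bu B in auto)
    moreover have "Y \<bullet> (B *\<^sub>v u) = (B *\<^sub>v u) \<bullet> Y" by (rule comm_scalar_prod[OF Y Bu])
    ultimately show ?thesis by simp
  qed
  have f6: "Y \<bullet> ((1 / (\<gamma> * \<rho>)) \<cdot>\<^sub>v Y) = 1 / (\<gamma> * \<rho>) * sqn Y"
    unfolding sqn_def by (rule scalar_prod_smult_right) simp
  show ?thesis unfolding H_quad_def
    using f1 f2 f4 f5 f6 by (simp add: u_def B_def c_def sqn_def algebra_simps)
qed

lemma reassoc1:
  fixes a V b w :: "real vec"
  assumes "a \<in> carrier_vec l" "V \<in> carrier_vec l" "b \<in> carrier_vec l" "w \<in> carrier_vec l"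
  shows "a + V - b - w = a + (V - b - w)"
  using assms by (intro eq_vecI) auto

lemma reassoc2:
  fixes s a b w :: "real vec"
  assumes "s \<in> carrier_vec l" "a \<in> carrier_vec l" "b \<in> carrier_vec l" "w \<in> carrier_vec l"
  shows "s + a - b - w = a + (s - b - w)"
  using assms by (intro eq_vecI) auto

lemma V1:
  fixes fa fc :: "nat \<Rightarrow> real vec"
  assumes j: "1 \<le> j" "j < m" and ca: "\<forall>i\<in>{1..m}. fa i \<in> carrier_vec l" and cc: "\<forall>i\<in>{1..m}. fc i \<in> carrier_vec l"
    and b: "b \<in> carrier_vec l" and yk: "yk \<in> carrier_vec l" and r: "\<rho> \<noteq> 0"
  shows "\<rho> \<cdot>\<^sub>v (fa j + (vsum l fc ({1..m} - {j}) - b - (1 / \<rho>) \<cdot>\<^sub>v yk))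
    = - (yk - \<rho> \<cdot>\<^sub>v (vsum l fa {1..<m} + fc m - b)) - \<rho> \<cdot>\<^sub>v vsum l (\<lambda>i. fa i - fc i) ({1..<m} - {j})"
proof (rule eq_vecI)
  have faj: "fa j \<in> carrier_vec l" and fcm: "fc m \<in> carrier_vec l" using ca cc j by auto
  show "dim_vec (\<rho> \<cdot>\<^sub>v (fa j + (vsum l fc ({1..m} - {j}) - b - (1 / \<rho>) \<cdot>\<^sub>v yk)))
      = dim_vec (- (yk - \<rho> \<cdot>\<^sub>v (vsum l fa {1..<m} + fc m - b)) - \<rho> \<cdot>\<^sub>v vsum l (\<lambda>i. fa i - fc i) ({1..<m} - {j}))"
    using faj b yk by simp
  fix q assume q: "q < dim_vec (- (yk - \<rho> \<cdot>\<^sub>v (vsum l fa {1..<m} + fc m - b)) - \<rho> \<cdot>\<^sub>v vsum l (\<lambda>i. fa i - fc i) ({1..<m} - {j}))"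
  hence q: "q < l" using yk by simp
  have s1: "{Suc 0..m} - {j} = insert m ({Suc 0..<m} - {j})" using j by auto
  have s2: "{Suc 0..<m} = insert j ({Suc 0..<m} - {j})" using j by auto
  have S1: "(\<Sum>i\<in>{Suc 0..m} - {j}. fc i $ q) = fc m $ q + (\<Sum>i\<in>{Suc 0..<m} - {j}. fc i $ q)"
    unfolding s1 by (subst sum.insert) auto
  have S2: "(\<Sum>i\<in>{Suc 0..<m}. fa i $ q) = fa j $ q + (\<Sum>i\<in>{Suc 0..<m} - {j}. fa i $ q)"
    by (subst s2, subst sum.insert) auto
  have S3: "(\<Sum>i\<in>{Suc 0..<m} - {j}. (fa i - fc i) $ q) = (\<Sum>i\<in>{Suc 0..<m} - {j}. fa i $ q) - (\<Sum>i\<in>{Suc 0..<m} - {j}. fc i $ q)"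
  proof -
    have "(\<Sum>i\<in>{Suc 0..<m} - {j}. (fa i - fc i) $ q) = (\<Sum>i\<in>{Suc 0..<m} - {j}. fa i $ q - fc i $ q)"
    proof (intro sum.cong refl)
      fix i assume "i \<in> {Suc 0..<m} - {j}"
      hence "fa i \<in> carrier_vec l" "fc i \<in> carrier_vec l" using ca cc by auto
      thus "(fa i - fc i) $ q = fa i $ q - fc i $ q" using q by simp
    qed
    thus ?thesis by (simp add: sum_subtractf)
  qed
  show "(\<rho> \<cdot>\<^sub>v (fa j + (vsum l fc ({1..m} - {j}) - b - (1 / \<rho>) \<cdot>\<^sub>v yk))) $ q
      = (- (yk - \<rho> \<cdot>\<^sub>v (vsum l fa {1..<m} + fc m - b)) - \<rho> \<cdot>\<^sub>v vsum l (\<lambda>i. fa i - fc i) ({1..<m} - {j})) $ q"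
    using q faj fcm b yk r by (simp add: S1 S2 S3 field_simps)
qed

lemma Vm:
  fixes Sa Aa Ac b yk :: "real vec"
  assumes c: "Sa \<in> carrier_vec l" "Aa \<in> carrier_vec l" "Ac \<in> carrier_vec l" "b \<in> carrier_vec l" "yk \<in> carrier_vec l"
    and r: "\<rho> \<noteq> 0"
  shows "\<rho> \<cdot>\<^sub>v (Aa + (\<gamma> \<cdot>\<^sub>v Sa + (1 - \<gamma>) \<cdot>\<^sub>v (b - Ac) - b - (1 / \<rho>) \<cdot>\<^sub>v yk))
     = - (yk - \<rho> \<cdot>\<^sub>v (\<gamma> \<cdot>\<^sub>v Sa + (1 - \<gamma>) \<cdot>\<^sub>v (b - Ac) + Aa - b))"
  using c r by (intro eq_vecI) (auto simp: field_simps)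

lemma avg_sp:
  fixes v :: "nat \<Rightarrow> real vec"
  assumes K: "finite K" "K \<noteq> {}" and v: "\<forall>k\<in>K. v k \<in> carrier_vec n" and u: "u \<in> carrier_vec n" and w: "w \<in> carrier_vec n"
  shows "((1 / real (card K)) \<cdot>\<^sub>v vsum n v K - u) \<bullet> w = (1 / real (card K)) * (\<Sum>k\<in>K. (v k - u) \<bullet> w)"
proof -
  have cK: "real (card K) > 0" using K by (simp add: card_gt_0_iff)
  have "((1 / real (card K)) \<cdot>\<^sub>v vsum n v K - u) \<bullet> w = ((1 / real (card K)) \<cdot>\<^sub>v vsum n v K) \<bullet> w - u \<bullet> w"
    by (rule minus_scalar_prod_distrib) (use u w in auto)
  also have "((1 / real (card K)) \<cdot>\<^sub>v vsum n v K) \<bullet> w = (1 / real (card K)) * (vsum n v K \<bullet> w)"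
    by (rule smult_scalar_prod_distrib) (use w in auto)
  also have "vsum n v K \<bullet> w = (\<Sum>k\<in>K. v k \<bullet> w)" by (rule sp_vsum[OF v w])
  finally have 1: "((1 / real (card K)) \<cdot>\<^sub>v vsum n v K - u) \<bullet> w = 1 / real (card K) * (\<Sum>k\<in>K. v k \<bullet> w) - u \<bullet> w" .
  have 2: "(\<Sum>k\<in>K. (v k - u) \<bullet> w) = (\<Sum>k\<in>K. v k \<bullet> w - u \<bullet> w)"
    using v u w by (intro sum.cong refl minus_scalar_prod_distrib) auto
  show ?thesis unfolding 1 2 using cK by (simp add: sum_subtractf field_simps)
qed

lemma avg_insert:
  fixes v :: "nat \<Rightarrow> real vec"
  assumes K: "finite F" "F \<noteq> {}" "k \<notin> F" and v: "v k \<in> carrier_vec n"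
  shows "(1 / real (card (insert k F))) \<cdot>\<^sub>v vsum n v (insert k F)
     = (1 / real (card F + 1)) \<cdot>\<^sub>v v k + (1 - 1 / real (card F + 1)) \<cdot>\<^sub>v ((1 / real (card F)) \<cdot>\<^sub>v vsum n v F)"
proof -
  have cF: "real (card F) > 0" using K by (simp add: card_gt_0_iff)
  have sc: "\<And>a S. (1 / (real (card F) + 1)) * (a + S) = 1 / (real (card F) + 1) * a + (1 - 1 / (real (card F) + 1)) * ((1 / real (card F)) * S)"
  proof -
    fix a S
    have c1: "real (card F) + 1 > 0" by simp
    have "1 - 1 / (real (card F) + 1) = real (card F) / (real (card F) + 1)" using c1 by (simp add: field_simps)
    hence "(1 - 1 / (real (card F) + 1)) * ((1 / real (card F)) * S) = S / (real (card F) + 1)" using cF by simp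
    thus "(1 / (real (card F) + 1)) * (a + S) = 1 / (real (card F) + 1) * a + (1 - 1 / (real (card F) + 1)) * ((1 / real (card F)) * S)"
      by (simp add: distrib_left)
  qed
  have ci: "card (insert k F) = card F + 1" using K by simp
  show ?thesis
  proof (rule eq_vecI)
    fix i assume "i < dim_vec ((1 / real (card F + 1)) \<cdot>\<^sub>v v k + (1 - 1 / real (card F + 1)) \<cdot>\<^sub>v ((1 / real (card F)) \<cdot>\<^sub>v vsum n v F))"
    hence i: "i < n" using v by simp
    have L: "((1 / real (card (insert k F))) \<cdot>\<^sub>v vsum n v (insert k F)) $ i = (1 / (real (card F) + 1)) * (v k $ i + (\<Sum>j\<in>F. v j $ i))"
      using i K by (simp add: ci)
    have R: "((1 / real (card F + 1)) \<cdot>\<^sub>v v k + (1 - 1 / real (card F + 1)) \<cdot>\<^sub>v ((1 / real (card F)) \<cdot>\<^sub>v vsum n v F)) $ i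
        = 1 / (real (card F) + 1) * v k $ i + (1 - 1 / (real (card F) + 1)) * ((1 / real (card F)) * (\<Sum>j\<in>F. v j $ i))"
      using i v by (simp add: add.commute)
    show "((1 / real (card (insert k F))) \<cdot>\<^sub>v vsum n v (insert k F)) $ i = ((1 / real (card F + 1)) \<cdot>\<^sub>v v k + (1 - 1 / real (card F + 1)) \<cdot>\<^sub>v ((1 / real (card F)) \<cdot>\<^sub>v vsum n v F)) $ i"
      unfolding L R by (rule sc)
  qed (use v in simp)
qed

lemma avg_in:
  fixes v :: "nat \<Rightarrow> real vec"
  assumes X: "convex_set_vec n X" and K: "finite K" "K \<noteq> {}" and v: "\<forall>k\<in>K. v k \<in> X"
  shows "(1 / real (card K)) \<cdot>\<^sub>v vsum n v K \<in> X"
  using K v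
proof (induction K rule: finite_ne_induct)
  case (singleton k)
  have "v k \<in> carrier_vec n" using X singleton unfolding convex_set_vec_def by auto
  hence "(1 / real (card {k})) \<cdot>\<^sub>v vsum n v {k} = v k" by (intro eq_vecI) auto
  thus ?case using singleton by simp
next
  case (insert k F)
  have vk: "v k \<in> X" "v k \<in> carrier_vec n" using insert X unfolding convex_set_vec_def by auto
  have IH: "(1 / real (card F)) \<cdot>\<^sub>v vsum n v F \<in> X" using insert by auto
  have t: "0 \<le> 1 / real (card F + 1)" "1 / real (card F + 1) \<le> 1" by auto
  show ?case unfolding avg_insert[where F=F and k=k and v=v, OF insert(1,2,3) vk(2)]
    using X vk(1) IH t unfolding convex_set_vec_def by blast
qed

lemma avg_jensen:
  fixes v :: "nat \<Rightarrow> real vec"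
  assumes f: "convex_fun_vec n f" and K: "finite K" "K \<noteq> {}" and v: "\<forall>k\<in>K. v k \<in> carrier_vec n"
  shows "f ((1 / real (card K)) \<cdot>\<^sub>v vsum n v K) \<le> (1 / real (card K)) * (\<Sum>k\<in>K. f (v k))"
  using K v
proof (induction K rule: finite_ne_induct)
  case (singleton k)
  hence "(1 / real (card {k})) \<cdot>\<^sub>v vsum n v {k} = v k" by (intro eq_vecI) auto
  thus ?case by simp
next
  case (insert k F)
  have vk: "v k \<in> carrier_vec n" using insert by auto
  have IH: "f ((1 / real (card F)) \<cdot>\<^sub>v vsum n v F) \<le> (1 / real (card F)) * (\<Sum>k\<in>F. f (v k))" using insert by auto
  have cF: "real (card F) > 0" using insert by (simp add: card_gt_0_iff)
  define t where "t = 1 / real (card F + 1)"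
  have t: "0 \<le> t" "t \<le> 1" by (auto simp: t_def)
  have avc: "(1 / real (card F)) \<cdot>\<^sub>v vsum n v F \<in> carrier_vec n" by simp
  have "f ((1 / real (card (insert k F))) \<cdot>\<^sub>v vsum n v (insert k F))
      = f (t \<cdot>\<^sub>v v k + (1 - t) \<cdot>\<^sub>v ((1 / real (card F)) \<cdot>\<^sub>v vsum n v F))"
    unfolding avg_insert[where F=F and k=k and v=v, OF insert(1,2,3) vk] t_def ..
  also have "\<dots> \<le> t * f (v k) + (1 - t) * f ((1 / real (card F)) \<cdot>\<^sub>v vsum n v F)"
    using f vk avc t unfolding convex_fun_vec_def by blast
  also have "\<dots> \<le> t * f (v k) + (1 - t) * ((1 / real (card F)) * (\<Sum>k\<in>F. f (v k)))"
    using IH t by (intro add_left_mono mult_left_mono) auto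
  also have "\<dots> = (1 / real (card (insert k F))) * (\<Sum>k\<in>insert k F. f (v k))"
  proof -
    have c1: "real (card F) + 1 > 0" by simp
    have "(1 - t) * (1 / real (card F)) = t" unfolding t_def using cF c1 by (simp add: field_simps)
    hence "(1 - t) * ((1 / real (card F)) * (\<Sum>k\<in>F. f (v k))) = t * (\<Sum>k\<in>F. f (v k))"
      by (subst mult.assoc[symmetric]) (simp only:)
    hence "t * f (v k) + (1 - t) * ((1 / real (card F)) * (\<Sum>k\<in>F. f (v k))) = t * (f (v k) + (\<Sum>k\<in>F. f (v k)))"
      by (simp add: distrib_left)
    thus ?thesis using insert by (simp add: t_def)
  qed
  finally show ?case .
qed



lemma neg_swap:
  fixes a u w :: "real vec"
  assumes "a \<in> carrier_vec n" "u \<in> carrier_vec n" "w \<in> carrier_vec n"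
  shows "(a - u) \<bullet> (- w) = (u - a) \<bullet> w"
proof -
  have "(a - u) \<bullet> (- w) = (\<Sum>i<n. (a - u) $ i * (- w) $ i)" by (rule ip_sum) (use assms in auto)
  also have "\<dots> = (\<Sum>i<n. (u - a) $ i * w $ i)" using assms by (intro sum.cong) (auto simp: algebra_simps)
  also have "\<dots> = (u - a) \<bullet> w" by (rule ip_sum[symmetric]) (use assms in auto)
  finally show ?thesis .
qed

lemma H_scalar:
  fixes a y \<rho> \<gamma> :: real
  assumes r: "\<rho> > 0" and g: "0 < \<gamma>" "\<gamma> < 2"
  shows "0 \<le> \<rho> / \<gamma> * (a * a) + 2 * ((1 - \<gamma>) / \<gamma>) * (a * y) + 1 / (\<gamma> * \<rho>) * (y * y)"
proof -
  have "\<rho> / \<gamma> * (a * a) + 2 * ((1 - \<gamma>) / \<gamma>) * (a * y) + 1 / (\<gamma> * \<rho>) * (y * y)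
     = ((\<rho> * a + (1 - \<gamma>) * y) * (\<rho> * a + (1 - \<gamma>) * y) + \<gamma> * (2 - \<gamma>) * (y * y)) / (\<gamma> * \<rho>)"
    using r g by (simp add: field_simps)
  moreover have "0 \<le> (\<rho> * a + (1 - \<gamma>) * y) * (\<rho> * a + (1 - \<gamma>) * y) + \<gamma> * (2 - \<gamma>) * (y * y)"
    using g by (intro add_nonneg_nonneg) auto
  ultimately show ?thesis using r g by simp
qed

lemma H_vec:
  fixes a y :: "real vec"
  assumes "a \<in> carrier_vec l" "y \<in> carrier_vec l" and r: "\<rho> > 0" and g: "0 < \<gamma>" "\<gamma> < 2"
  shows "0 \<le> \<rho> / \<gamma> * sqn a + 2 * ((1 - \<gamma>) / \<gamma>) * (a \<bullet> y) + 1 / (\<gamma> * \<rho>) * sqn y"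
proof -
  have "\<rho> / \<gamma> * sqn a + 2 * ((1 - \<gamma>) / \<gamma>) * (a \<bullet> y) + 1 / (\<gamma> * \<rho>) * sqn y
     = (\<Sum>i<l. \<rho> / \<gamma> * (a $ i * a $ i) + 2 * ((1 - \<gamma>) / \<gamma>) * (a $ i * y $ i) + 1 / (\<gamma> * \<rho>) * (y $ i * y $ i))"
    using assms by (simp add: sqn_sum[where l=l] ip_sum[where l=l] sum_distrib_left sum.distrib)
  also have "\<dots> \<ge> 0" using H_scalar[OF r g] by (intro sum_nonneg) auto
  finally show ?thesis by simp
qed

locale Lctx =
  fixes m l :: nat and n :: "nat \<Rightarrow> nat" and \<theta> :: "nat \<Rightarrow> real vec \<Rightarrow> real" and X :: "nat \<Rightarrow> real vec set"
    and A P :: "nat \<Rightarrow> real mat" and b :: "real vec" and \<rho> \<gamma> :: real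
    and x :: "nat \<Rightarrow> nat \<Rightarrow> real vec" and y :: "nat \<Rightarrow> real vec"
  assumes m2: "m \<ge> 2" and rho: "\<rho> > 0" and g1: "0 < \<gamma>" and g2: "\<gamma> < 2" and bc: "b \<in> carrier_vec l"
    and th: "\<forall>i\<in>{1..m}. convex_fun_vec (n i) (\<theta> i)"
    and Xc: "\<forall>i\<in>{1..m}. convex_set_vec (n i) (X i)"
    and Acar: "\<forall>i\<in>{1..m}. A i \<in> carrier_mat l (n i)"
    and Ppd: "\<forall>i\<in>{1..m}. sym_pos_def (n i) (P i)"
    and G1: "G1_pos_def m n \<rho> A P"
    and it: "lgadmm_seq m l \<rho> \<gamma> \<theta> X A b P x y"
begin

lemma Ai: "i \<in> {1..m} \<Longrightarrow> A i \<in> carrier_mat l (n i)" using Acar by auto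
lemma Pi: "i \<in> {1..m} \<Longrightarrow> P i \<in> carrier_mat (n i) (n i)" using Ppd unfolding sym_pos_def_def by auto
lemma Pt: "i \<in> {1..m} \<Longrightarrow> transpose_mat (P i) = P i" using Ppd unfolding sym_pos_def_def by auto
lemma Ppsd: "i \<in> {1..m} \<Longrightarrow> v \<in> carrier_vec (n i) \<Longrightarrow> 0 \<le> quad (P i) v"
proof -
  assume i: "i \<in> {1..m}" and v: "v \<in> carrier_vec (n i)"
  show ?thesis
  proof (cases "v = 0\<^sub>v (n i)")
    case True thus ?thesis unfolding quad_def using Pi[OF i] by simp
  next
    case False thus ?thesis using Ppd i v unfolding sym_pos_def_def by force
  qed
qed
lemma Xsub: "i \<in> {1..m} \<Longrightarrow> X i \<subseteq> carrier_vec (n i)" using Xc unfolding convex_set_vec_def by auto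
lemma thi: "i \<in> {1..m} \<Longrightarrow> convex_fun_vec (n i) (\<theta> i)" using th by auto
lemma Xci: "i \<in> {1..m} \<Longrightarrow> convex_set_vec (n i) (X i)" using Xc by auto

lemma it0: "in_W m l X (x 0) (y 0)" using it unfolding lgadmm_seq_def by auto
lemma itj: "j \<in> {1..<m} \<Longrightarrow> is_argmin (X j) (sub_obj m l \<rho> \<theta> A b P (x k) (y k) j) (x (Suc k) j)"
  using it unfolding lgadmm_seq_def by auto
lemma itm: "is_argmin (X m) (sub_obj_m m l \<rho> \<gamma> \<theta> A b P (x (Suc k)) (x k m) (y k)) (x (Suc k) m)"
  using it unfolding lgadmm_seq_def by auto
lemma ity: "y (Suc k) = y k - \<rho> \<cdot>\<^sub>v (\<gamma> \<cdot>\<^sub>v vsum l (\<lambda>i. A i *\<^sub>v x (Suc k) i) {1..<m}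
              + (1 - \<gamma>) \<cdot>\<^sub>v (b - A m *\<^sub>v x k m) + A m *\<^sub>v x (Suc k) m - b)"
  using it unfolding lgadmm_seq_def by auto

lemma xX: "i \<in> {1..m} \<Longrightarrow> x k i \<in> X i"
proof (cases k)
  case 0 thus "i \<in> {1..m} \<Longrightarrow> x k i \<in> X i" using it0 unfolding in_W_def by auto
next
  case (Suc k')
  assume i: "i \<in> {1..m}"
  show ?thesis
  proof (cases "i = m")
    case True thus ?thesis using itm[of k'] Suc unfolding is_argmin_def by auto
  next
    case False hence "i \<in> {1..<m}" using i by auto
    thus ?thesis using itj[of i k'] Suc unfolding is_argmin_def by auto
  qed
qed

lemma xc: "i \<in> {1..m} \<Longrightarrow> x k i \<in> carrier_vec (n i)" using xX Xsub by blast

lemma m_in: "m \<in> {1..m}" using m2 by auto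

lemma yc: "y k \<in> carrier_vec l"
proof (induction k)
  case 0 thus ?case using it0 unfolding in_W_def by auto
next
  case (Suc k)
  have "A m *\<^sub>v x k m \<in> carrier_vec l" "A m *\<^sub>v x (Suc k) m \<in> carrier_vec l"
    using mult_mat_vec_carrier[OF Ai[OF m_in] xc[OF m_in]] by auto
  thus ?case using Suc bc unfolding ity[of k] by auto
qed

lemma G1_nonneg:
  assumes R: "\<forall>i\<in>{1..<m}. R i \<in> carrier_vec (n i)"
  shows "0 \<le> G1_quad m \<rho> A P R"
proof (cases "\<exists>i\<in>{1..<m}. R i \<noteq> 0\<^sub>v (n i)")
  case True thus ?thesis using G1 R unfolding G1_pos_def_def by (meson less_le)
next
  case False
  hence z: "\<forall>i\<in>{1..<m}. R i = 0\<^sub>v (n i)" by auto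
  have 1: "(\<Sum>i\<in>{1..<m}. R i \<bullet> (P i *\<^sub>v R i)) = 0"
  proof (intro sum.neutral ballI)
    fix i assume i: "i \<in> {1..<m}"
    hence "P i *\<^sub>v R i \<in> carrier_vec (n i)" using Pi[of i] R by auto
    thus "R i \<bullet> (P i *\<^sub>v R i) = 0" using z i by simp
  qed
  have 2: "(\<Sum>i\<in>{1..<m}. \<Sum>j\<in>{1..<m} - {i}. R i \<bullet> (((- \<rho>) \<cdot>\<^sub>m (transpose_mat (A i) * A j)) *\<^sub>v R j)) = 0"
  proof (intro sum.neutral ballI)
    fix i j assume i: "i \<in> {1..<m}" and j: "j \<in> {1..<m} - {i}"
    have M: "(- \<rho>) \<cdot>\<^sub>m (transpose_mat (A i) * A j) \<in> carrier_mat (n i) (n j)"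
      using Ai[of i] Ai[of j] i j by auto
    have "R j \<in> carrier_vec (n j)" using R j by auto
    hence "((- \<rho>) \<cdot>\<^sub>m (transpose_mat (A i) * A j)) *\<^sub>v R j \<in> carrier_vec (n i)"
      using mult_mat_vec_carrier[OF M] by auto
    thus "R i \<bullet> (((- \<rho>) \<cdot>\<^sub>m (transpose_mat (A i) * A j)) *\<^sub>v R j) = 0" using z i by simp
  qed
  show ?thesis unfolding G1_quad_def 1 2 by simp
qed

sublocale G: G1ctx m l n A P
  by unfold_locales (use Ai Pi Pt in auto)

lemma H_nonneg:
  assumes U: "\<forall>i\<in>{1..m}. U i \<in> carrier_vec (n i)" and Y: "Y \<in> carrier_vec l"
  shows "0 \<le> H_quad m \<rho> \<gamma> A P U Y"
proof -
  have Um: "U m \<in> carrier_vec (n m)" using U m_in by auto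
  have "0 \<le> G1_quad m \<rho> A P U" using U by (intro G1_nonneg) auto
  moreover have "0 \<le> quad (P m) (U m)" using Ppsd[OF m_in Um] .
  moreover have "0 \<le> \<rho> / \<gamma> * sqn (A m *\<^sub>v U m) + 2 * ((1 - \<gamma>) / \<gamma>) * ((A m *\<^sub>v U m) \<bullet> Y) + 1 / (\<gamma> * \<rho>) * sqn Y"
    using Ai[OF m_in] Um Y rho g1 g2 by (intro H_vec[where l=l]) auto
  ultimately show ?thesis unfolding Hq_eq[where m=m and A=A and P=P and U=U and Y=Y and n=n and l=l and \<rho>=\<rho> and \<gamma>=\<gamma>, OF Ai[OF m_in] Pi[OF m_in] Um Y] by linarith
qed

end



lemma lin1:
  fixes p1 p2 q :: "real vec"
  assumes "p1 \<in> carrier_vec l" "p2 \<in> carrier_vec l" "q \<in> carrier_vec l"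
  shows "(- p1 - r \<cdot>\<^sub>v p2) \<bullet> q = - (p1 \<bullet> q) - r * (p2 \<bullet> q)"
proof -
  have "(- p1 - r \<cdot>\<^sub>v p2) \<bullet> q = (\<Sum>i<l. (- p1 - r \<cdot>\<^sub>v p2) $ i * q $ i)" by (rule ip_sum) (use assms in auto)
  also have "\<dots> = (\<Sum>i<l. - (p1 $ i * q $ i) - r * (p2 $ i * q $ i))"
    using assms by (intro sum.cong) (auto simp: algebra_simps)
  also have "\<dots> = - (p1 \<bullet> q) - r * (p2 \<bullet> q)"
    using assms by (simp add: ip_sum[where l=l] sum_subtractf sum_negf sum_distrib_left)
  finally show ?thesis .
qed

lemma lin2:
  fixes p q :: "real vec"
  assumes "p \<in> carrier_vec l" "q \<in> carrier_vec l"
  shows "r * (p \<bullet> q) = (r \<cdot>\<^sub>v p) \<bullet> q"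
  using assms by (simp add: smult_scalar_prod_distrib[where n=l])

context Lctx
begin

lemma Axc: "i \<in> {1..m} \<Longrightarrow> A i *\<^sub>v x k i \<in> carrier_vec l"
  using mult_mat_vec_carrier[OF Ai xc] by blast

lemma ybc: "ybar m l \<rho> A b x y k \<in> carrier_vec l"
  unfolding ybar_def using yc Axc[OF m_in] bc by simp

lemma VIj:
  assumes W: "in_W m l X u yv" and j: "j \<in> {1..<m}"
  shows "0 \<le> \<theta> j (u j) - \<theta> j (x (Suc k) j)
     - ybar m l \<rho> A b x y k \<bullet> (A j *\<^sub>v (u j - x (Suc k) j))
     + ((u j - x (Suc k) j) \<bullet> (P j *\<^sub>v (x (Suc k) j - x k j))
        - \<rho> * (\<Sum>i\<in>{1..<m} - {j}. (A j *\<^sub>v (u j - x (Suc k) j)) \<bullet> (A i *\<^sub>v (x (Suc k) i - x k i))))"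
proof -
  have jm: "j \<in> {1..m}" and j1: "1 \<le> j" and j2: "j < m" using j by auto
  have uX: "u j \<in> X j" using W jm unfolding in_W_def by auto
  have uc: "u j \<in> carrier_vec (n j)" using uX Xsub[OF jm] by auto
  let ?a = "x (Suc k)" and ?c = "x k"
  let ?fa = "\<lambda>i. A i *\<^sub>v ?a i" and ?fc = "\<lambda>i. A i *\<^sub>v ?c i"
  let ?v = "vsum l ?fc ({1..m} - {j}) - b - (1 / \<rho>) \<cdot>\<^sub>v y k"
  let ?q = "A j *\<^sub>v (u j - ?a j)"
  let ?W = "vsum l (\<lambda>i. ?fa i - ?fc i) ({1..<m} - {j})"
  let ?yb = "ybar m l \<rho> A b x y k"
  have ykc: "y k \<in> carrier_vec l" by (rule yc)
  have vc: "?v \<in> carrier_vec l" using bc ykc by simp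
  have ajc: "?a j \<in> carrier_vec (n j)" "?c j \<in> carrier_vec (n j)" using xc[OF jm] by auto
  have fac: "\<forall>i\<in>{1..m}. ?fa i \<in> carrier_vec l" and fcc: "\<forall>i\<in>{1..m}. ?fc i \<in> carrier_vec l"
    using Axc by auto
  have qc: "?q \<in> carrier_vec l" using Ai[OF jm] uc ajc by auto
  have f: "sub_obj m l \<rho> \<theta> A b P (x k) (y k) j z = \<theta> j z + \<rho> / 2 * sqn (A j *\<^sub>v z + ?v) + 1 / 2 * quad (P j) (z - ?c j)"
    if z: "z \<in> X j" for z
  proof -
    have zc: "z \<in> carrier_vec (n j)" using z Xsub[OF jm] by auto
    have "A j *\<^sub>v z + vsum l ?fc ({1..m} - {j}) - b - (1 / \<rho>) \<cdot>\<^sub>v y k = A j *\<^sub>v z + ?v"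
      by (rule reassoc1[where l=l]) (use Ai[OF jm] zc bc ykc in auto)
    thus ?thesis unfolding sub_obj_def by simp
  qed
  have VI: "0 \<le> \<theta> j (u j) - \<theta> j (?a j) + \<rho> * ((A j *\<^sub>v ?a j + ?v) \<bullet> ?q) + (?a j - ?c j) \<bullet> (P j *\<^sub>v (u j - ?a j))"
    by (rule vi_opt[OF thi[OF jm] Xci[OF jm] Ai[OF jm] vc Pi[OF jm] Pt[OF jm] ajc(2) itj[OF j] f uX])
  have e1: "\<rho> * ((A j *\<^sub>v ?a j + ?v) \<bullet> ?q) = (\<rho> \<cdot>\<^sub>v (?fa j + ?v)) \<bullet> ?q"
    by (rule lin2[where l=l]) (use fac jm vc qc in auto)
  have e2: "\<rho> \<cdot>\<^sub>v (?fa j + ?v) = - ?yb - \<rho> \<cdot>\<^sub>v ?W"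
    unfolding ybar_def using V1[OF j1 j2 fac fcc bc ykc, of \<rho>] rho by simp
  have Wc: "?W \<in> carrier_vec l" by simp
  have e3: "(- ?yb - \<rho> \<cdot>\<^sub>v ?W) \<bullet> ?q = - (?yb \<bullet> ?q) - \<rho> * (?W \<bullet> ?q)" by (rule lin1[OF ybc Wc qc])
  have e4: "?W \<bullet> ?q = (\<Sum>i\<in>{1..<m} - {j}. ?q \<bullet> (A i *\<^sub>v (?a i - ?c i)))"
  proof -
    have "?W \<bullet> ?q = (\<Sum>i\<in>{1..<m} - {j}. (?fa i - ?fc i) \<bullet> ?q)"
      by (rule sp_vsum) (use fac fcc qc in auto)
    also have "\<dots> = (\<Sum>i\<in>{1..<m} - {j}. ?q \<bullet> (A i *\<^sub>v (?a i - ?c i)))"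
    proof (intro sum.cong refl)
      fix i assume i: "i \<in> {1..<m} - {j}"
      hence im: "i \<in> {1..m}" by auto
      have "A i *\<^sub>v (?a i - ?c i) = ?fa i - ?fc i"
        by (rule mult_minus_distrib_mat_vec[OF Ai[OF im]]) (use xc[OF im] in auto)
      moreover have "(?fa i - ?fc i) \<bullet> ?q = ?q \<bullet> (?fa i - ?fc i)"
        by (rule comm_scalar_prod[where n=l]) (use fac fcc im qc in auto)
      ultimately show "(?fa i - ?fc i) \<bullet> ?q = ?q \<bullet> (A i *\<^sub>v (?a i - ?c i))" by simp
    qed
    finally show ?thesis .
  qed
  have e6: "(?a j - ?c j) \<bullet> (P j *\<^sub>v (u j - ?a j)) = (u j - ?a j) \<bullet> (P j *\<^sub>v (?a j - ?c j))"
    by (rule sym_swap[OF Pi[OF jm] Pt[OF jm]]) (use ajc uc in auto)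
  show ?thesis using VI unfolding e1 e2 e3 e4 e6 by simp
qed

lemma VIm:
  assumes W: "in_W m l X u yv"
  shows "0 \<le> \<theta> m (u m) - \<theta> m (x (Suc k) m) - y (Suc k) \<bullet> (A m *\<^sub>v u m - A m *\<^sub>v x (Suc k) m)
     + (u m - x (Suc k) m) \<bullet> (P m *\<^sub>v (x (Suc k) m - x k m))"
proof -
  have uX: "u m \<in> X m" using W m_in unfolding in_W_def by auto
  have uc: "u m \<in> carrier_vec (n m)" using uX Xsub[OF m_in] by auto
  let ?Sa = "vsum l (\<lambda>i. A i *\<^sub>v x (Suc k) i) {1..<m}"
  let ?Ac = "A m *\<^sub>v x k m" and ?Aa = "A m *\<^sub>v x (Suc k) m"
  let ?v = "\<gamma> \<cdot>\<^sub>v ?Sa + (1 - \<gamma>) \<cdot>\<^sub>v (b - ?Ac) - b - (1 / \<rho>) \<cdot>\<^sub>v y k"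
  let ?q = "A m *\<^sub>v (u m - x (Suc k) m)"
  have ykc: "y k \<in> carrier_vec l" by (rule yc)
  have Acc: "?Ac \<in> carrier_vec l" "?Aa \<in> carrier_vec l" using Axc[OF m_in] by auto
  have vc: "?v \<in> carrier_vec l" using bc ykc Acc by simp
  have ac: "x (Suc k) m \<in> carrier_vec (n m)" "x k m \<in> carrier_vec (n m)" using xc[OF m_in] by auto
  have qc: "?q \<in> carrier_vec l" using Ai[OF m_in] uc ac by auto
  have f: "sub_obj_m m l \<rho> \<gamma> \<theta> A b P (x (Suc k)) (x k m) (y k) z = \<theta> m z + \<rho> / 2 * sqn (A m *\<^sub>v z + ?v) + 1 / 2 * quad (P m) (z - x k m)"
    if z: "z \<in> X m" for z
  proof -
    have zc: "z \<in> carrier_vec (n m)" using z Xsub[OF m_in] by auto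
    have "\<gamma> \<cdot>\<^sub>v ?Sa + (1 - \<gamma>) \<cdot>\<^sub>v (b - ?Ac) + A m *\<^sub>v z - b - (1 / \<rho>) \<cdot>\<^sub>v y k = A m *\<^sub>v z + ?v"
      by (rule reassoc2[where l=l]) (use Ai[OF m_in] zc bc ykc Acc in auto)
    thus ?thesis unfolding sub_obj_m_def by simp
  qed
  have VI: "0 \<le> \<theta> m (u m) - \<theta> m (x (Suc k) m) + \<rho> * ((?Aa + ?v) \<bullet> ?q) + (x (Suc k) m - x k m) \<bullet> (P m *\<^sub>v (u m - x (Suc k) m))"
    by (rule vi_opt[OF thi[OF m_in] Xci[OF m_in] Ai[OF m_in] vc Pi[OF m_in] Pt[OF m_in] ac(2) itm f uX])
  have e1: "\<rho> * ((?Aa + ?v) \<bullet> ?q) = (\<rho> \<cdot>\<^sub>v (?Aa + ?v)) \<bullet> ?q"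
    by (rule lin2[where l=l]) (use Acc vc qc in auto)
  have e2: "\<rho> \<cdot>\<^sub>v (?Aa + ?v) = - y (Suc k)"
    unfolding ity[of k] by (rule Vm) (use Acc bc ykc rho in auto)
  have y1c: "y (Suc k) \<in> carrier_vec l" by (rule yc)
  have e3: "(- y (Suc k)) \<bullet> ?q = - (y (Suc k) \<bullet> ?q)" by (rule scalar_prod_uminus_left) (use y1c qc Ai[OF m_in] in simp)
  have e4: "?q = A m *\<^sub>v u m - ?Aa" by (rule mult_minus_distrib_mat_vec[OF Ai[OF m_in] uc ac(1)])
  have e6: "(x (Suc k) m - x k m) \<bullet> (P m *\<^sub>v (u m - x (Suc k) m)) = (u m - x (Suc k) m) \<bullet> (P m *\<^sub>v (x (Suc k) m - x k m))"
    by (rule sym_swap[OF Pi[OF m_in] Pt[OF m_in]]) (use ac uc in auto)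
  show ?thesis using VI unfolding e1 e2 e3 e6 e4[symmetric] by simp
qed

end



lemma final_arith:
  fixes Ru Ra ybT GED tmu tma y1A EPD GDD qD yvTA YB a1 a2 a3 b1 b2 b3 Tyv Ayv GEE qE :: real
  assumes "0 \<le> Ru - Ra - ybT + GED" "0 \<le> tmu - tma - y1A + EPD" "0 \<le> GDD" "0 \<le> qD"
    "- ybT - y1A + yvTA + YB \<le> 1 / 2 * (a1 + a2 + a3 - (b1 + b2 + b3))" "yvTA = Tyv + Ayv"
  shows "Ra + tma - (Ru + tmu) + (Tyv + Ayv) + YB
    \<le> 1 / 2 * (GEE + 2 * GED + GDD + (qE + 2 * EPD + qD) + a1 + a2 + a3 - (GEE + qE + b1 + b2 + b3))"
proof -
  have "1 / 2 * (GEE + 2 * GED + GDD + (qE + 2 * EPD + qD) + a1 + a2 + a3 - (GEE + qE + b1 + b2 + b3))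
    = GED + EPD + GDD / 2 + qD / 2 + 1 / 2 * (a1 + a2 + a3 - (b1 + b2 + b3))" by (simp add: field_simps)
  thus ?thesis using assms by linarith
qed

context Lctx
begin

lemma step:
  assumes W: "in_W m l X u yv"
  shows "vi_gap m l \<theta> A b (x (Suc k)) (ybar m l \<rho> A b x y k) u yv
    \<le> 1 / 2 * (H_quad m \<rho> \<gamma> A P (\<lambda>i. u i - x k i) (yv - y k) - H_quad m \<rho> \<gamma> A P (\<lambda>i. u i - x (Suc k) i) (yv - y (Suc k)))"
proof -
  have uX: "\<And>i. i \<in> {1..m} \<Longrightarrow> u i \<in> X i" and yvc: "yv \<in> carrier_vec l" using W unfolding in_W_def by auto
  have uc: "\<And>i. i \<in> {1..m} \<Longrightarrow> u i \<in> carrier_vec (n i)" using uX Xsub by blast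
  have Auc: "\<And>i. i \<in> {1..m} \<Longrightarrow> A i *\<^sub>v u i \<in> carrier_vec l" using mult_mat_vec_carrier[OF Ai uc] by blast
  let ?a = "x (Suc k)" and ?c = "x k" and ?yb = "ybar m l \<rho> A b x y k" and ?y1 = "y (Suc k)" and ?yk = "y k"
  let ?E = "\<lambda>i. u i - x (Suc k) i" and ?D = "\<lambda>i. x (Suc k) i - x k i"
  let ?Sa = "vsum l (\<lambda>i. A i *\<^sub>v x (Suc k) i) {1..<m}"
  let ?T = "vsum l (\<lambda>i. A i *\<^sub>v (u i - x (Suc k) i)) {1..<m}"
  let ?Aa = "A m *\<^sub>v x (Suc k) m" and ?Ac = "A m *\<^sub>v x k m" and ?Ae = "A m *\<^sub>v u m"
  have Ec: "\<And>i. i \<in> {1..m} \<Longrightarrow> ?E i \<in> carrier_vec (n i)" and Dc: "\<And>i. i \<in> {1..m} \<Longrightarrow> ?D i \<in> carrier_vec (n i)"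
    using uc xc by auto
  have AEc: "\<And>i. i \<in> {1..m} \<Longrightarrow> A i *\<^sub>v ?E i \<in> carrier_vec l" using mult_mat_vec_carrier[OF Ai Ec] by blast
  have AEm: "A m *\<^sub>v ?E m = ?Ae - ?Aa"
    by (rule mult_minus_distrib_mat_vec[OF Ai[OF m_in] uc[OF m_in] xc[OF m_in]])
  have ACm: "A m *\<^sub>v (u m - x k m) = ?Ae - ?Ac"
    by (rule mult_minus_distrib_mat_vec[OF Ai[OF m_in] uc[OF m_in] xc[OF m_in]])
  have ykc: "?yk \<in> carrier_vec l" and y1c: "?y1 \<in> carrier_vec l" by (rule yc)+
  have ybc: "?yb \<in> carrier_vec l" by (rule ybc)
  have Acc: "?Aa \<in> carrier_vec l" "?Ac \<in> carrier_vec l" "?Ae \<in> carrier_vec l"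
    using Axc[OF m_in] Auc[OF m_in] by auto
  have Tc: "?T \<in> carrier_vec l" and Sac: "?Sa \<in> carrier_vec l" by simp_all
  have RE: "\<forall>i\<in>{1..<m}. ?E i \<in> carrier_vec (n i)" and RD: "\<forall>i\<in>{1..<m}. ?D i \<in> carrier_vec (n i)"
    using Ec Dc by auto
  have ybT: "?yb \<bullet> ?T = (\<Sum>j\<in>{1..<m}. ?yb \<bullet> (A j *\<^sub>v ?E j))"
  proof -
    have "?yb \<bullet> ?T = ?T \<bullet> ?yb" by (rule comm_scalar_prod[OF ybc Tc])
    also have "\<dots> = (\<Sum>j\<in>{1..<m}. (A j *\<^sub>v ?E j) \<bullet> ?yb)" by (rule sp_vsum) (use AEc ybc in auto)
    also have "\<dots> = (\<Sum>j\<in>{1..<m}. ?yb \<bullet> (A j *\<^sub>v ?E j))"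
      by (intro sum.cong refl comm_scalar_prod[where n=l]) (use AEc ybc in auto)
    finally show ?thesis .
  qed
  have F1: "0 \<le> (\<Sum>j\<in>{1..<m}. \<theta> j (u j)) - (\<Sum>j\<in>{1..<m}. \<theta> j (?a j)) - ?yb \<bullet> ?T + G1b m \<rho> A P ?E ?D"
  proof -
    have "0 \<le> (\<Sum>j\<in>{1..<m}. \<theta> j (u j) - \<theta> j (x (Suc k) j)
       - ybar m l \<rho> A b x y k \<bullet> (A j *\<^sub>v (u j - x (Suc k) j))
       + ((u j - x (Suc k) j) \<bullet> (P j *\<^sub>v (x (Suc k) j - x k j))
        - \<rho> * (\<Sum>i\<in>{1..<m} - {j}. (A j *\<^sub>v (u j - x (Suc k) j)) \<bullet> (A i *\<^sub>v (x (Suc k) i - x k i)))))"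
      by (rule sum_nonneg) (rule VIj[OF W])
    also have "\<dots> = (\<Sum>j\<in>{1..<m}. \<theta> j (u j)) - (\<Sum>j\<in>{1..<m}. \<theta> j (?a j)) - ?yb \<bullet> ?T + G1b m \<rho> A P ?E ?D"
      unfolding ybT G1b_def by (simp add: sum.distrib sum_subtractf sum_distrib_left)
    finally show ?thesis .
  qed
  have F2: "0 \<le> \<theta> m (u m) - \<theta> m (?a m) - ?y1 \<bullet> (?Ae - ?Aa) + ?E m \<bullet> (P m *\<^sub>v ?D m)"
    using VIm[OF W] .
  have gg1: "G1_quad m \<rho> A P (\<lambda>i. u i - x k i) = G1b m \<rho> A P (\<lambda>i. ?E i + ?D i) (\<lambda>i. ?E i + ?D i)"
  proof -
    have "G1_quad m \<rho> A P (\<lambda>i. u i - x k i) = G1b m \<rho> A P (\<lambda>i. u i - x k i) (\<lambda>i. u i - x k i)"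
      by (rule G1_quad_eq[where n=n and l=l]) (use Ai uc xc in auto)
    also have "\<dots> = G1b m \<rho> A P (\<lambda>i. ?E i + ?D i) (\<lambda>i. ?E i + ?D i)"
    proof (rule G1b_cong)
      show "\<forall>i\<in>{1..<m}. u i - x k i = ?E i + ?D i"
      proof
        fix i assume "i \<in> {1..<m}" hence i: "i \<in> {1..m}" by auto
        have d: "dim_vec (x (Suc k) i) = n i" "dim_vec (x k i) = n i" "dim_vec (u i) = n i"
          using uc[OF i] xc[OF i] by auto
        show "u i - x k i = ?E i + ?D i" using d by (intro eq_vecI) auto
      qed
      thus "\<forall>i\<in>{1..<m}. u i - x k i = ?E i + ?D i" .
    qed
    finally show ?thesis .
  qed
  have gg2: "G1b m \<rho> A P (\<lambda>i. ?E i + ?D i) (\<lambda>i. ?E i + ?D i) = G1b m \<rho> A P ?E ?E + 2 * G1b m \<rho> A P ?E ?D + G1b m \<rho> A P ?D ?D"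
    by (rule G.G1b_expand[OF RE RD])
  have gg3: "G1_quad m \<rho> A P (\<lambda>i. u i - x (Suc k) i) = G1b m \<rho> A P ?E ?E"
    by (rule G1_quad_eq[where n=n and l=l]) (use Ai uc xc in auto)
  have gg4: "0 \<le> G1b m \<rho> A P ?D ?D"
  proof -
    have "G1_quad m \<rho> A P ?D = G1b m \<rho> A P ?D ?D" by (rule G1_quad_eq[where n=n and l=l]) (use Ai xc in auto)
    moreover have "0 \<le> G1_quad m \<rho> A P ?D" by (rule G1_nonneg[OF RD])
    ultimately show ?thesis by simp
  qed
  have q1: "quad (P m) (u m - x k m) = quad (P m) (?E m) + 2 * (?E m \<bullet> (P m *\<^sub>v ?D m)) + quad (P m) (?D m)"
  proof -
    have d: "dim_vec (x (Suc k) m) = n m" "dim_vec (x k m) = n m" "dim_vec (u m) = n m"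
      using uc[OF m_in] xc[OF m_in] by auto
    have "u m - x k m = ?E m + ?D m" using d by (intro eq_vecI) auto
    thus ?thesis using quad_add[OF Pi[OF m_in] Pt[OF m_in] Ec[OF m_in] Dc[OF m_in]] by simp
  qed
  have q2: "0 \<le> quad (P m) (?D m)" by (rule Ppsd[OF m_in Dc[OF m_in]])
  have Hq1: "H_quad m \<rho> \<gamma> A P (\<lambda>i. u i - x k i) (yv - y k) = G1_quad m \<rho> A P (\<lambda>i. u i - x k i) + quad (P m) (u m - x k m)
     + \<rho> / \<gamma> * sqn (?Ae - ?Ac) + 2 * ((1 - \<gamma>) / \<gamma>) * ((?Ae - ?Ac) \<bullet> (yv - y k)) + 1 / (\<gamma> * \<rho>) * sqn (yv - y k)"
    using Hq_eq[where m=m and A=A and P=P and U="\<lambda>i. u i - x k i" and Y="yv - y k" and n=n and l=l and \<rho>=\<rho> and \<gamma>=\<gamma>,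
        OF Ai[OF m_in] Pi[OF m_in]] uc[OF m_in] xc[OF m_in] yvc ykc ACm by simp
  have Hq2: "H_quad m \<rho> \<gamma> A P (\<lambda>i. u i - x (Suc k) i) (yv - y (Suc k)) = G1_quad m \<rho> A P (\<lambda>i. u i - x (Suc k) i) + quad (P m) (?E m)
     + \<rho> / \<gamma> * sqn (?Ae - ?Aa) + 2 * ((1 - \<gamma>) / \<gamma>) * ((?Ae - ?Aa) \<bullet> (yv - y (Suc k))) + 1 / (\<gamma> * \<rho>) * sqn (yv - y (Suc k))"
    using Hq_eq[where m=m and A=A and P=P and U="\<lambda>i. u i - x (Suc k) i" and Y="yv - y (Suc k)" and n=n and l=l and \<rho>=\<rho> and \<gamma>=\<gamma>,
        OF Ai[OF m_in] Pi[OF m_in]] uc[OF m_in] xc[OF m_in] yvc y1c AEm by simp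
  have sm: "{1..m} = insert m {1..<m}" using m2 by auto
  have ts: "\<And>f. theta_sum m \<theta> f = (\<Sum>i\<in>{1..<m}. \<theta> i (f i)) + \<theta> m (f m)"
    unfolding theta_sum_def sm by (subst sum.insert) auto
  have L1: "(\<Sum>i\<in>{1..m}. (?a i - u i) \<bullet> - (transpose_mat (A i) *\<^sub>v yv)) = ?T \<bullet> yv + (?Ae - ?Aa) \<bullet> yv"
  proof -
    have "(\<Sum>i\<in>{1..m}. (?a i - u i) \<bullet> - (transpose_mat (A i) *\<^sub>v yv)) = (\<Sum>i\<in>{1..m}. (A i *\<^sub>v ?E i) \<bullet> yv)"
    proof (intro sum.cong refl)
      fix i assume i: "i \<in> {1..m}"
      have "(?a i - u i) \<bullet> - (transpose_mat (A i) *\<^sub>v yv) = ?E i \<bullet> (transpose_mat (A i) *\<^sub>v yv)"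
        by (rule neg_swap[where n="n i"]) (use xc[OF i] uc[OF i] Ai[OF i] yvc in auto)
      also have "\<dots> = (A i *\<^sub>v ?E i) \<bullet> yv" by (rule sp_transpose[OF Ai[OF i] Ec[OF i] yvc])
      finally show "(?a i - u i) \<bullet> - (transpose_mat (A i) *\<^sub>v yv) = (A i *\<^sub>v ?E i) \<bullet> yv" .
    qed
    also have "\<dots> = (\<Sum>i\<in>{1..<m}. (A i *\<^sub>v ?E i) \<bullet> yv) + (A m *\<^sub>v ?E m) \<bullet> yv"
      unfolding sm by (subst sum.insert) auto
    also have "(\<Sum>i\<in>{1..<m}. (A i *\<^sub>v ?E i) \<bullet> yv) = ?T \<bullet> yv"
      by (rule sp_vsum[symmetric]) (use AEc yvc in auto)
    finally show ?thesis unfolding AEm .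
  qed
  have L2: "vsum l (\<lambda>i. A i *\<^sub>v u i) {1..m} = ?Sa + ?T + ?Ae"
  proof (rule eq_vecI)
    fix q assume "q < dim_vec (?Sa + ?T + ?Ae)"
    hence q: "q < l" using Ai[OF m_in] by simp
    have e: "\<And>i. i \<in> {1..m} \<Longrightarrow> (A i *\<^sub>v u i) $ q = (A i *\<^sub>v x (Suc k) i) $ q + (A i *\<^sub>v (u i - x (Suc k) i)) $ q"
    proof -
      fix i assume i: "i \<in> {1..m}"
      have "A i *\<^sub>v (u i - x (Suc k) i) = A i *\<^sub>v u i - A i *\<^sub>v x (Suc k) i"
        by (rule mult_minus_distrib_mat_vec[OF Ai[OF i] uc[OF i] xc[OF i]])
      show "(A i *\<^sub>v u i) $ q = (A i *\<^sub>v x (Suc k) i) $ q + (A i *\<^sub>v (u i - x (Suc k) i)) $ q"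
      proof -
        have d: "dim_vec (A i *\<^sub>v u i) = l" "dim_vec (A i *\<^sub>v x (Suc k) i) = l"
          using Ai[OF i] by auto
        show ?thesis using q d \<open>A i *\<^sub>v (u i - x (Suc k) i) = A i *\<^sub>v u i - A i *\<^sub>v x (Suc k) i\<close> by simp
      qed
    qed
    have "vsum l (\<lambda>i. A i *\<^sub>v u i) {1..m} $ q = (\<Sum>i\<in>{1..<m}. (A i *\<^sub>v u i) $ q) + (A m *\<^sub>v u m) $ q"
      using q unfolding sm by (subst vsum_index) (auto simp: sum.insert)
    also have "(\<Sum>i\<in>{1..<m}. (A i *\<^sub>v u i) $ q) = (\<Sum>i\<in>{1..<m}. (A i *\<^sub>v x (Suc k) i) $ q + (A i *\<^sub>v (u i - x (Suc k) i)) $ q)"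
      by (rule sum.cong[OF refl]) (use e in auto)
    also have "\<dots> = (\<Sum>i\<in>{1..<m}. (A i *\<^sub>v x (Suc k) i) $ q) + (\<Sum>i\<in>{1..<m}. (A i *\<^sub>v (u i - x (Suc k) i)) $ q)"
      by (rule sum.distrib)
    finally show "vsum l (\<lambda>i. A i *\<^sub>v u i) {1..m} $ q = (?Sa + ?T + ?Ae) $ q"
      using q Acc Ai[OF m_in] by simp
  qed (use Acc Ai[OF m_in] in simp)
  have LC: "- (?yb \<bullet> ?T) - (?y1 \<bullet> (?Ae - ?Aa)) + yv \<bullet> (?T + (?Ae - ?Aa)) + (?yb - yv) \<bullet> (?Sa + ?T + ?Ae - b)
    \<le> 1 / 2 * ((\<rho> / \<gamma> * sqn (?Ae - ?Ac) + 2 * ((1 - \<gamma>) / \<gamma>) * ((?Ae - ?Ac) \<bullet> (yv - ?yk)) + 1 / (\<gamma> * \<rho>) * sqn (yv - ?yk))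
      - (\<rho> / \<gamma> * sqn (?Ae - ?Aa) + 2 * ((1 - \<gamma>) / \<gamma>) * ((?Ae - ?Aa) \<bullet> (yv - ?y1)) + 1 / (\<gamma> * \<rho>) * sqn (yv - ?y1)))"
    by (rule lclaim[OF Tc Sac Acc(1) Acc(2) Acc(3) bc ykc yvc rho g1 g2])
      (simp_all only: ybar_def ity[of k])
  have F8: "yv \<bullet> (?T + (?Ae - ?Aa)) = ?T \<bullet> yv + (?Ae - ?Aa) \<bullet> yv"
  proof -
    have "yv \<bullet> (?T + (?Ae - ?Aa)) = yv \<bullet> ?T + yv \<bullet> (?Ae - ?Aa)"
      by (rule scalar_prod_add_distrib[OF yvc]) (use Tc Acc in auto)
    also have "yv \<bullet> ?T = ?T \<bullet> yv" by (rule comm_scalar_prod[OF yvc Tc])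
    also have "yv \<bullet> (?Ae - ?Aa) = (?Ae - ?Aa) \<bullet> yv" by (rule comm_scalar_prod[OF yvc]) (use Acc in auto)
    finally show ?thesis .
  qed
  have gap: "vi_gap m l \<theta> A b (x (Suc k)) ?yb u yv
     = ((\<Sum>i\<in>{1..<m}. \<theta> i (?a i)) + \<theta> m (?a m)) - ((\<Sum>i\<in>{1..<m}. \<theta> i (u i)) + \<theta> m (u m))
       + (?T \<bullet> yv + (?Ae - ?Aa) \<bullet> yv) + (?yb - yv) \<bullet> (?Sa + ?T + ?Ae - b)"
    unfolding vi_gap_def ts L1 L2 ..
  show ?thesis
    unfolding gap Hq1 Hq2 gg1 gg2 gg3 q1
    by (rule final_arith[OF F1 F2 gg4 q2 LC F8])
qed

end



context Lctx
begin

lemma telescope: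
  assumes W: "in_W m l X u yv"
  shows "(\<Sum>k\<in>{0..t}. vi_gap m l \<theta> A b (x (Suc k)) (ybar m l \<rho> A b x y k) u yv)
     \<le> 1 / 2 * H_quad m \<rho> \<gamma> A P (\<lambda>i. u i - x 0 i) (yv - y 0)"
proof -
  define h where "h k = H_quad m \<rho> \<gamma> A P (\<lambda>i. u i - x k i) (yv - y k)" for k
  have uc: "\<And>i. i \<in> {1..m} \<Longrightarrow> u i \<in> carrier_vec (n i)" and yvc: "yv \<in> carrier_vec l"
    using W Xsub unfolding in_W_def by blast+
  have hnn: "0 \<le> h k" for k unfolding h_def
    by (rule H_nonneg) (use uc xc yvc yc in auto)
  have tel: "(\<Sum>k\<in>{0..t}. 1 / 2 * (h k - h (Suc k))) = 1 / 2 * (h 0 - h (Suc t))" for t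
    by (induction t) (auto simp: algebra_simps)
  have "(\<Sum>k\<in>{0..t}. vi_gap m l \<theta> A b (x (Suc k)) (ybar m l \<rho> A b x y k) u yv) \<le> (\<Sum>k\<in>{0..t}. 1 / 2 * (h k - h (Suc k)))"
    by (rule sum_mono) (unfold h_def, rule step[OF W])
  also have "\<dots> = 1 / 2 * (h 0 - h (Suc t))" by (rule tel)
  also have "\<dots> \<le> 1 / 2 * h 0" using hnn[of "Suc t"] by simp
  finally show ?thesis unfolding h_def .
qed

lemma avg_gap:
  assumes W: "in_W m l X u yv"
  shows "vi_gap m l \<theta> A b
          (\<lambda>i. (1 / real (t + 1)) \<cdot>\<^sub>v vsum (n i) (\<lambda>k. x (Suc k) i) {0..t})
          ((1 / real (t + 1)) \<cdot>\<^sub>v vsum l (ybar m l \<rho> A b x y) {0..t}) u yv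
     \<le> (1 / real (t + 1)) * (\<Sum>k\<in>{0..t}. vi_gap m l \<theta> A b (x (Suc k)) (ybar m l \<rho> A b x y k) u yv)"
proof -
  have uc: "\<And>i. i \<in> {1..m} \<Longrightarrow> u i \<in> carrier_vec (n i)" and yvc: "yv \<in> carrier_vec l"
    using W Xsub unfolding in_W_def by blast+
  define c where "c = real (t + 1)"
  have c0: "c > 0" unfolding c_def by simp
  have cK: "real (card {0..t}) = c" unfolding c_def by simp
  have K: "finite {0..t}" "{0..t} \<noteq> {}" by auto
  let ?L = "\<lambda>k i. (x (Suc k) i - u i) \<bullet> - (transpose_mat (A i) *\<^sub>v yv)"
  let ?wy = "vsum l (\<lambda>i. A i *\<^sub>v u i) {1..m} - b"
  let ?Ly = "\<lambda>k. (ybar m l \<rho> A b x y k - yv) \<bullet> ?wy"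
  have th1: "theta_sum m \<theta> (\<lambda>i. (1 / real (t + 1)) \<cdot>\<^sub>v vsum (n i) (\<lambda>k. x (Suc k) i) {0..t})
      \<le> (1 / c) * (\<Sum>k\<in>{0..t}. theta_sum m \<theta> (x (Suc k)))"
  proof -
    have "theta_sum m \<theta> (\<lambda>i. (1 / real (t + 1)) \<cdot>\<^sub>v vsum (n i) (\<lambda>k. x (Suc k) i) {0..t})
        \<le> (\<Sum>i\<in>{1..m}. (1 / c) * (\<Sum>k\<in>{0..t}. \<theta> i (x (Suc k) i)))"
      unfolding theta_sum_def
    proof (rule sum_mono)
      fix i assume i: "i \<in> {1..m}"
      show "\<theta> i ((1 / real (t + 1)) \<cdot>\<^sub>v vsum (n i) (\<lambda>k. x (Suc k) i) {0..t}) \<le> (1 / c) * (\<Sum>k\<in>{0..t}. \<theta> i (x (Suc k) i))"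
        using avg_jensen[OF thi[OF i] K, of "\<lambda>k. x (Suc k) i"] xc[OF i] unfolding cK by (simp add: c_def)
    qed
    also have "\<dots> = (1 / c) * (\<Sum>k\<in>{0..t}. theta_sum m \<theta> (x (Suc k)))"
      unfolding theta_sum_def sum_distrib_left[symmetric] by (subst sum.swap) simp
    finally show ?thesis .
  qed
  have l1: "(\<Sum>i\<in>{1..m}. ((\<lambda>i. (1 / real (t + 1)) \<cdot>\<^sub>v vsum (n i) (\<lambda>k. x (Suc k) i) {0..t}) i - u i) \<bullet> - (transpose_mat (A i) *\<^sub>v yv))
      = (1 / c) * (\<Sum>k\<in>{0..t}. \<Sum>i\<in>{1..m}. ?L k i)"
  proof -
    have "(\<Sum>i\<in>{1..m}. ((\<lambda>i. (1 / real (t + 1)) \<cdot>\<^sub>v vsum (n i) (\<lambda>k. x (Suc k) i) {0..t}) i - u i) \<bullet> - (transpose_mat (A i) *\<^sub>v yv))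
        = (\<Sum>i\<in>{1..m}. (1 / c) * (\<Sum>k\<in>{0..t}. ?L k i))"
    proof (rule sum.cong[OF refl])
      fix i assume i: "i \<in> {1..m}"
      have w: "- (transpose_mat (A i) *\<^sub>v yv) \<in> carrier_vec (n i)" using Ai[OF i] yvc by auto
      show "((\<lambda>i. (1 / real (t + 1)) \<cdot>\<^sub>v vsum (n i) (\<lambda>k. x (Suc k) i) {0..t}) i - u i) \<bullet> - (transpose_mat (A i) *\<^sub>v yv)
          = (1 / c) * (\<Sum>k\<in>{0..t}. ?L k i)"
        using avg_sp[OF K, of "\<lambda>k. x (Suc k) i" "n i" "u i", OF _ uc[OF i] w] xc[OF i] unfolding cK
        by (simp add: c_def)
    qed
    also have "\<dots> = (1 / c) * (\<Sum>k\<in>{0..t}. \<Sum>i\<in>{1..m}. ?L k i)"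
      unfolding sum_distrib_left[symmetric] by (subst sum.swap) simp
    finally show ?thesis .
  qed
  have l2: "((1 / real (t + 1)) \<cdot>\<^sub>v vsum l (ybar m l \<rho> A b x y) {0..t} - yv) \<bullet> ?wy = (1 / c) * (\<Sum>k\<in>{0..t}. ?Ly k)"
    using avg_sp[OF K, of "ybar m l \<rho> A b x y" l yv ?wy] ybc yvc bc unfolding cK by (simp add: c_def)
  have S: "(\<Sum>k\<in>{0..t}. vi_gap m l \<theta> A b (x (Suc k)) (ybar m l \<rho> A b x y k) u yv)
     = (\<Sum>k\<in>{0..t}. theta_sum m \<theta> (x (Suc k))) - c * theta_sum m \<theta> u + (\<Sum>k\<in>{0..t}. \<Sum>i\<in>{1..m}. ?L k i) + (\<Sum>k\<in>{0..t}. ?Ly k)"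
    unfolding vi_gap_def by (simp add: sum.distrib sum_subtractf c_def)
  have "vi_gap m l \<theta> A b
          (\<lambda>i. (1 / real (t + 1)) \<cdot>\<^sub>v vsum (n i) (\<lambda>k. x (Suc k) i) {0..t})
          ((1 / real (t + 1)) \<cdot>\<^sub>v vsum l (ybar m l \<rho> A b x y) {0..t}) u yv
     \<le> (1 / c) * (\<Sum>k\<in>{0..t}. theta_sum m \<theta> (x (Suc k))) - theta_sum m \<theta> u
        + (1 / c) * (\<Sum>k\<in>{0..t}. \<Sum>i\<in>{1..m}. ?L k i) + (1 / c) * (\<Sum>k\<in>{0..t}. ?Ly k)"
    unfolding vi_gap_def l1 l2 using th1 by linarith
  also have "\<dots> = (1 / c) * (\<Sum>k\<in>{0..t}. vi_gap m l \<theta> A b (x (Suc k)) (ybar m l \<rho> A b x y k) u yv)"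
    unfolding S using c0 by (simp add: field_simps)
  finally show ?thesis unfolding c_def .
qed

end



theorem theorem4p1:
  fixes m l :: nat and n :: "nat \<Rightarrow> nat"
    and \<theta> :: "nat \<Rightarrow> real vec \<Rightarrow> real" and X :: "nat \<Rightarrow> real vec set"
    and A P :: "nat \<Rightarrow> real mat" and b :: "real vec"
    and \<rho> \<gamma> :: real
    and x :: "nat \<Rightarrow> nat \<Rightarrow> real vec" and y :: "nat \<Rightarrow> real vec"
    and t :: nat
  assumes m2: "m \<ge> 2" and l_pos: "l > 0" and n_pos: "\<forall>i\<in>{1..m}. n i > 0"
    and theta_cvx: "\<forall>i\<in>{1..m}. convex_fun_vec (n i) (\<theta> i)"
    and X_ne: "\<forall>i\<in>{1..m}. X i \<noteq> {}"
    and X_cvx: "\<forall>i\<in>{1..m}. convex_set_vec (n i) (X i)"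
    and X_closed: "\<forall>i\<in>{1..m}. closed_set_vec (n i) (X i)"
    and A_rank: "\<forall>i\<in>{1..m}. full_column_rank l (n i) (A i)"
    and b_dim: "b \<in> carrier_vec l"
    and P_sol: "\<exists>us. (\<forall>i\<in>{1..m}. us i \<in> X i) \<and> vsum l (\<lambda>i. A i *\<^sub>v us i) {1..m} = b \<and>
                 (\<forall>u. (\<forall>i\<in>{1..m}. u i \<in> X i) \<and> vsum l (\<lambda>i. A i *\<^sub>v u i) {1..m} = b
                    \<longrightarrow> theta_sum m \<theta> us \<le> theta_sum m \<theta> u)"
    and Wstar_ne: "\<exists>us ys. in_W m l X us ys \<and>
                 (\<forall>u yv. in_W m l X u yv \<longrightarrow> vi_gap m l \<theta> A b u yv us ys \<ge> 0)"
    and rho_pos: "\<rho> > 0" and gamma: "0 < \<gamma>" "\<gamma> < 2"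
    and P_pd: "\<forall>i\<in>{1..m}. sym_pos_def (n i) (P i)"
    and G1_pd: "G1_pos_def m n \<rho> A P"
    and iter: "lgadmm_seq m l \<rho> \<gamma> \<theta> X A b P x y"
    and t_pos: "t > 0"
  shows "in_W m l X (\<lambda>i. (1 / real (t + 1)) \<cdot>\<^sub>v vsum (n i) (\<lambda>k. x (Suc k) i) {0..t})
                     ((1 / real (t + 1)) \<cdot>\<^sub>v vsum l (ybar m l \<rho> A b x y) {0..t})
       \<and> (\<forall>u yv. in_W m l X u yv \<longrightarrow>
            vi_gap m l \<theta> A b
              (\<lambda>i. (1 / real (t + 1)) \<cdot>\<^sub>v vsum (n i) (\<lambda>k. x (Suc k) i) {0..t})
              ((1 / real (t + 1)) \<cdot>\<^sub>v vsum l (ybar m l \<rho> A b x y) {0..t})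
              u yv
            \<le> 1 / (2 * real (t + 1)) * H_quad m \<rho> \<gamma> A P (\<lambda>i. u i - x 0 i) (yv - y 0))"
proof -
  interpret L: Lctx m l n \<theta> X A P b \<rho> \<gamma> x y
  proof
    show "2 \<le> m" by (rule m2)
    show "0 < \<rho>" by (rule rho_pos)
    show "0 < \<gamma>" "\<gamma> < 2" by (rule gamma(1), rule gamma(2))
    show "b \<in> carrier_vec l" by (rule b_dim)
    show "\<forall>i\<in>{1..m}. convex_fun_vec (n i) (\<theta> i)" by (rule theta_cvx)
    show "\<forall>i\<in>{1..m}. convex_set_vec (n i) (X i)" by (rule X_cvx)
    show "\<forall>i\<in>{1..m}. A i \<in> carrier_mat l (n i)" using A_rank unfolding full_column_rank_def by blast
    show "\<forall>i\<in>{1..m}. sym_pos_def (n i) (P i)" by (rule P_pd)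
    show "G1_pos_def m n \<rho> A P" by (rule G1_pd)
    show "lgadmm_seq m l \<rho> \<gamma> \<theta> X A b P x y" by (rule iter)
  qed
  have K: "finite {0..t}" "{0..t} \<noteq> {}" by auto
  have cK: "card {0..t} = t + 1" by simp
  have W: "in_W m l X (\<lambda>i. (1 / real (t + 1)) \<cdot>\<^sub>v vsum (n i) (\<lambda>k. x (Suc k) i) {0..t})
                     ((1 / real (t + 1)) \<cdot>\<^sub>v vsum l (ybar m l \<rho> A b x y) {0..t})"
    unfolding in_W_def
  proof (intro conjI ballI)
    fix i assume i: "i \<in> {1..m}"
    show "(1 / real (t + 1)) \<cdot>\<^sub>v vsum (n i) (\<lambda>k. x (Suc k) i) {0..t} \<in> X i"
      using avg_in[OF L.Xci[OF i] K, of "\<lambda>k. x (Suc k) i"] L.xX[OF i] unfolding cK by simp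
  qed simp
  show ?thesis
  proof (intro conjI allI impI W)
    fix u yv assume uy: "in_W m l X u yv"
    have "vi_gap m l \<theta> A b
              (\<lambda>i. (1 / real (t + 1)) \<cdot>\<^sub>v vsum (n i) (\<lambda>k. x (Suc k) i) {0..t})
              ((1 / real (t + 1)) \<cdot>\<^sub>v vsum l (ybar m l \<rho> A b x y) {0..t}) u yv
        \<le> (1 / real (t + 1)) * (\<Sum>k\<in>{0..t}. vi_gap m l \<theta> A b (x (Suc k)) (ybar m l \<rho> A b x y k) u yv)"
      by (rule L.avg_gap[OF uy])
    also have "\<dots> \<le> (1 / real (t + 1)) * (1 / 2 * H_quad m \<rho> \<gamma> A P (\<lambda>i. u i - x 0 i) (yv - y 0))"
      by (rule mult_left_mono[OF L.telescope[OF uy]]) simp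
    also have "\<dots> = 1 / (2 * real (t + 1)) * H_quad m \<rho> \<gamma> A P (\<lambda>i. u i - x 0 i) (yv - y 0)" by simp
    finally show "vi_gap m l \<theta> A b
              (\<lambda>i. (1 / real (t + 1)) \<cdot>\<^sub>v vsum (n i) (\<lambda>k. x (Suc k) i) {0..t})
              ((1 / real (t + 1)) \<cdot>\<^sub>v vsum l (ybar m l \<rho> A b x y) {0..t})
              u yv
            \<le> 1 / (2 * real (t + 1)) * H_quad m \<rho> \<gamma> A P (\<lambda>i. u i - x 0 i) (yv - y 0)" .
  qed
qed


end
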